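(* Let $L$ be a non-abelian nilpotent Lie ring additively isomorphic to $\mathbb{Z}^h$, of nilpotency class $c$. Then (1) $\alpha_L^{\leq}\le h-\frac12$ if $c=2$, and $\alpha_L^{\leq}\le h-\frac{1}{c-1}$ if $c>2$; (2) $\alpha_L^{\lhd}\le h-1$.
   Context: For a Lie ring $L$ additively isomorphic to $\mathbb{Z}^h$, $a_n^{\leq}(L)$ (resp. $a_n^{\lhd}(L)$) is the number of Lie subrings (resp. ideals) of additive index $n$, and $\alpha_L^*$ is the abscissa of convergence of $\zeta_L^*(s)=\sum_n a_n^*(L)n^{-s}$, $*\in\{\leq,\lhd\}$. *)

theory Defs
  imports "HOL-Analysis.Analysis" "HOL-Library.Extended_Real"
begin

text \<open>A Lie ring additively isomorphic to Z^h is modelled as the additive group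
  int^'n (h = CARD('n)) together with a Lie bracket B.\<close>

definition lie_ring :: "(int^'n \<Rightarrow> int^'n \<Rightarrow> int^'n) \<Rightarrow> bool" where
  "lie_ring B \<longleftrightarrow>
     (\<forall>x y z. B (x + y) z = B x z + B y z) \<and>
     (\<forall>x y z. B x (y + z) = B x y + B x z) \<and>
     (\<forall>x. B x x = 0) \<and>
     (\<forall>x y z. B x (B y z) + B y (B z x) + B z (B x y) = 0)"

definition add_subgroup :: "('a::ab_group_add) set \<Rightarrow> bool" where
  "add_subgroup M \<longleftrightarrow> 0 \<in> M \<and> (\<forall>x\<in>M. \<forall>y\<in>M. x + y \<in> M) \<and> (\<forall>x\<in>M. - x \<in> M)"

definition add_span :: "('a::ab_group_add) set \<Rightarrow> 'a set" where
  "add_span S = \<Inter> {M. add_subgroup M \<and> S \<subseteq> M}"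

text \<open>Additive index (number of cosets; 0 if infinite).\<close>
definition add_index :: "('a::ab_group_add) set \<Rightarrow> nat" where
  "add_index M = card {(\<lambda>m. x + m) ` M | x. True}"

definition lie_subring :: "(int^'n \<Rightarrow> int^'n \<Rightarrow> int^'n) \<Rightarrow> (int^'n) set \<Rightarrow> bool" where
  "lie_subring B M \<longleftrightarrow> add_subgroup M \<and> (\<forall>x\<in>M. \<forall>y\<in>M. B x y \<in> M)"

definition lie_ideal :: "(int^'n \<Rightarrow> int^'n \<Rightarrow> int^'n) \<Rightarrow> (int^'n) set \<Rightarrow> bool" where
  "lie_ideal B M \<longleftrightarrow> add_subgroup M \<and> (\<forall>x. \<forall>y\<in>M. B x y \<in> M)"

text \<open>Lower central series: lcs B 0 = L = gamma_1, lcs B (Suc i) = [L, lcs B i].\<close>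
fun lcs :: "(int^'n \<Rightarrow> int^'n \<Rightarrow> int^'n) \<Rightarrow> nat \<Rightarrow> (int^'n) set" where
  "lcs B 0 = UNIV"
| "lcs B (Suc i) = add_span {B x y | x y. y \<in> lcs B i}"

text \<open>Nilpotent of class c: gamma_{c+1} = 0 but gamma_c \<noteq> 0.\<close>
definition nilpotent_class :: "(int^'n \<Rightarrow> int^'n \<Rightarrow> int^'n) \<Rightarrow> nat \<Rightarrow> bool" where
  "nilpotent_class B c \<longleftrightarrow> lcs B c = {0} \<and> lcs B (c - 1) \<noteq> {0}"

definition abelian_lie :: "(int^'n \<Rightarrow> int^'n \<Rightarrow> int^'n) \<Rightarrow> bool" where
  "abelian_lie B \<longleftrightarrow> (\<forall>x y. B x y = 0)"

definition num_subrings :: "(int^'n \<Rightarrow> int^'n \<Rightarrow> int^'n) \<Rightarrow> nat \<Rightarrow> nat" where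
  "num_subrings B n = card {M. lie_subring B M \<and> add_index M = n}"

definition num_ideals :: "(int^'n \<Rightarrow> int^'n \<Rightarrow> int^'n) \<Rightarrow> nat \<Rightarrow> nat" where
  "num_ideals B n = card {M. lie_ideal B M \<and> add_index M = n}"

definition abscissa :: "(nat \<Rightarrow> nat) \<Rightarrow> ereal" where
  "abscissa a = Inf {ereal s | s. summable (\<lambda>n. real (a (Suc n)) / real (Suc n) powr s)}"

end

theory Submission
  imports Defs
begin

definition ev :: "'n \<Rightarrow> int^'n" where "ev j = (\<chi> i. if i = j then 1 else 0)"
definition VV :: "'n set \<Rightarrow> (int^'n) set" where "VV J = {v. \<forall>i. i \<notin> J \<longrightarrow> v$i = 0}"
definition cosets :: "'n set \<Rightarrow> (int^'n) set \<Rightarrow> (int^'n) set set" where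
  "cosets J M = {(\<lambda>m. x + m) ` M | x. x \<in> VV J}"
definition idx :: "'n set \<Rightarrow> (int^'n) set \<Rightarrow> nat" where "idx J M = card (cosets J M)"
definition dco :: "'n \<Rightarrow> (int^'n) set \<Rightarrow> nat" where
  "dco j M = (LEAST d::nat. 0 < d \<and> (\<exists>v\<in>M. v$j = int d))"
definition Gs :: "'n set \<Rightarrow> (int^'n) set set" where
  "Gs J = {M. add_subgroup M \<and> M \<subseteq> VV J \<and> finite (cosets J M)}"

lemma ev_comp[simp]: "ev j $ i = (if i = j then 1 else 0)" by (simp add: ev_def)

lemma VV_UNIV[simp]: "VV UNIV = UNIV" by (auto simp: VV_def)
lemma idx_UNIV: "add_index M = idx UNIV M"
  by (simp add: add_index_def idx_def cosets_def)

lemma VV_add: "u \<in> VV J \<Longrightarrow> v \<in> VV J \<Longrightarrow> u + v \<in> VV J" by (auto simp: VV_def)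
lemma VV_minus: "u \<in> VV J \<Longrightarrow> - u \<in> VV J" by (auto simp: VV_def)
lemma VV_diff: "u \<in> VV J \<Longrightarrow> v \<in> VV J \<Longrightarrow> u - v \<in> VV J" by (auto simp: VV_def)
lemma VV_zero[simp]: "0 \<in> VV J" by (auto simp: VV_def)
lemma VV_smult: "u \<in> VV J \<Longrightarrow> k *s u \<in> VV J" by (auto simp: VV_def)
lemma VV_ev: "j \<in> J \<Longrightarrow> ev j \<in> VV J" by (auto simp: VV_def)
lemma VV_mono: "J \<subseteq> K \<Longrightarrow> VV J \<subseteq> VV K" by (auto simp: VV_def)
lemma VV_Int: "VV J \<inter> VV K = VV (J \<inter> K)" by (auto simp: VV_def)
lemma VV_empty: "VV {} = {0}" by (auto simp: VV_def vec_eq_iff)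

lemma subgroup_zero: "add_subgroup M \<Longrightarrow> 0 \<in> M" by (simp add: add_subgroup_def)
lemma subgroup_add: "add_subgroup M \<Longrightarrow> x \<in> M \<Longrightarrow> y \<in> M \<Longrightarrow> x + y \<in> M" by (simp add: add_subgroup_def)
lemma subgroup_uminus: "add_subgroup M \<Longrightarrow> x \<in> M \<Longrightarrow> - x \<in> M" by (simp add: add_subgroup_def)
lemma subgroup_diff: "add_subgroup M \<Longrightarrow> x \<in> M \<Longrightarrow> y \<in> M \<Longrightarrow> x - y \<in> M"
  using subgroup_add[of M x "-y"] subgroup_uminus[of M y] by simp

lemma subgroup_smult_nat: "add_subgroup M \<Longrightarrow> x \<in> M \<Longrightarrow> int n *s x \<in> M"
proof (induction n)
  case 0 then show ?case by (simp add: subgroup_zero)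
next
  case (Suc n)
  have "int (Suc n) *s x = int n *s x + x" by (simp add: vector_sadd_rdistrib)
  then show ?case using Suc subgroup_add by metis
qed

lemma subgroup_smult: assumes "add_subgroup M" "x \<in> M" shows "(k::int) *s x \<in> M"
proof (cases "k \<ge> 0")
  case True
  then have "k = int (nat k)" by simp
  then show ?thesis using subgroup_smult_nat[OF assms, of "nat k"] by simp
next
  case False
  then have "k = - int (nat (-k))" by simp
  moreover have "(- int (nat (-k))) *s x = - (int (nat (-k)) *s x)" by (simp add: vec_eq_iff)
  ultimately show ?thesis using subgroup_smult_nat[OF assms, of "nat (-k)"] subgroup_uminus[OF assms(1)] by metis
qed

lemma subgroup_Int: "add_subgroup M \<Longrightarrow> add_subgroup N \<Longrightarrow> add_subgroup (M \<inter> N)"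
  by (auto simp: add_subgroup_def)
lemma subgroup_VV: "add_subgroup (VV J)"
  by (auto simp: add_subgroup_def VV_def)

definition addb :: "(int^'n \<Rightarrow> int^'n) \<Rightarrow> bool" where
  "addb T \<longleftrightarrow> bij T \<and> (\<forall>u v. T (u+v) = T u + T v)"
definition Bt :: "(int^'n \<Rightarrow> int^'n) \<Rightarrow> (int^'n \<Rightarrow> int^'n \<Rightarrow> int^'n) \<Rightarrow> (int^'n \<Rightarrow> int^'n \<Rightarrow> int^'n)" where
  "Bt T B = (\<lambda>u v. T (B (inv T u) (inv T v)))"
definition bilin :: "(int^'n \<Rightarrow> int^'n \<Rightarrow> int^'n) \<Rightarrow> bool" where
  "bilin B \<longleftrightarrow> (\<forall>x y z. B (x + y) z = B x z + B y z) \<and> (\<forall>x y z. B x (y + z) = B x y + B x z)"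

lemma addb_add: "addb T \<Longrightarrow> T (u+v) = T u + T v" by (simp add: addb_def)
lemma addb_zero: "addb T \<Longrightarrow> T 0 = 0"
  using addb_add[of T 0 0] by simp
lemma addb_uminus: "addb T \<Longrightarrow> T (-u) = - T u"
  using addb_add[of T u "-u"] addb_zero[of T] by (metis add.right_inverse minus_unique)
lemma addb_diff: "addb T \<Longrightarrow> T (u-v) = T u - T v"
  using addb_add[of T u "-v"] addb_uminus[of T v] by simp
lemma addb_inj: "addb T \<Longrightarrow> inj T" by (simp add: addb_def bij_is_inj)
lemma addb_surj: "addb T \<Longrightarrow> surj T" by (simp add: addb_def bij_is_surj)
lemma addb_inv_f: "addb T \<Longrightarrow> inv T (T x) = x" by (simp add: addb_inj)
lemma addb_f_inv: "addb T \<Longrightarrow> T (inv T x) = x" by (simp add: addb_surj surj_f_inv_f)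

lemma addb_smult_nat: "addb T \<Longrightarrow> T (int n *s u) = int n *s T u"
proof (induction n)
  case 0 then show ?case by (simp add: addb_zero)
next
  case (Suc n)
  have "int (Suc n) *s u = int n *s u + u" by (simp add: vector_sadd_rdistrib)
  then show ?case using Suc addb_add[OF Suc.prems] by (simp add: vector_sadd_rdistrib)
qed

lemma addb_smult: assumes "addb T" shows "T (k *s u) = k *s T u"
proof (cases "k \<ge> 0")
  case True
  then show ?thesis using addb_smult_nat[OF assms, of "nat k"] by simp
next
  case False
  then have k: "k = - int (nat (-k))" by simp
  have "\<And>w. (- int (nat (-k))) *s w = - (int (nat (-k)) *s w)" by (simp add: vec_eq_iff)
  then show ?thesis using k addb_smult_nat[OF assms, of "nat (-k)"] addb_uminus[OF assms] by metis
qed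

lemma addb_inv: assumes "addb T" shows "addb (inv T)"
proof -
  have "bij (inv T)" using assms by (simp add: addb_def bij_imp_bij_inv)
  moreover have "inv T (u+v) = inv T u + inv T v" for u v
  proof -
    have "T (inv T u + inv T v) = u + v" using assms by (simp add: addb_add addb_f_inv)
    then show ?thesis using assms by (metis addb_inv_f)
  qed
  ultimately show ?thesis by (simp add: addb_def)
qed

lemma addb_comp: "addb S \<Longrightarrow> addb T \<Longrightarrow> addb (S \<circ> T)"
  by (auto simp: addb_def bij_comp)

lemma addb_id: "addb id" by (simp add: addb_def)

lemma bilin_lie: "lie_ring B \<Longrightarrow> bilin B" by (simp add: lie_ring_def bilin_def)

lemma bilin_zero1: "bilin B \<Longrightarrow> B 0 y = 0"
  unfolding bilin_def by (metis add_0 add_cancel_right_right)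
lemma bilin_zero2: "bilin B \<Longrightarrow> B x 0 = 0"
  unfolding bilin_def by (metis add_0 add_cancel_right_right)
lemma bilin_smult1_nat: "bilin B \<Longrightarrow> B (int n *s x) y = int n *s B x y"
proof (induction n)
  case 0 then show ?case by (simp add: bilin_zero1)
next
  case (Suc n)
  have "int (Suc n) *s x = int n *s x + x" by (simp add: vector_sadd_rdistrib)
  then show ?case using Suc by (simp add: bilin_def vector_sadd_rdistrib)
qed
lemma bilin_smult2_nat: "bilin B \<Longrightarrow> B x (int n *s y) = int n *s B x y"
proof (induction n)
  case 0 then show ?case by (simp add: bilin_zero2)
next
  case (Suc n)
  have "int (Suc n) *s y = int n *s y + y" by (simp add: vector_sadd_rdistrib)
  then show ?case using Suc by (simp add: bilin_def vector_sadd_rdistrib)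
qed
lemma bilin_uminus1: "bilin B \<Longrightarrow> B (-x) y = - B x y"
  unfolding bilin_def by (metis add.right_inverse add_eq_0_iff bilin_zero1 bilin_def)
lemma bilin_uminus2: "bilin B \<Longrightarrow> B x (-y) = - B x y"
  unfolding bilin_def by (metis add.right_inverse add_eq_0_iff bilin_zero2 bilin_def)
lemma neg_smult: "(- int m) *s w = - (int m *s w)" by (simp add: vec_eq_iff)
lemma bilin_smult1: assumes "bilin B" shows "B (k *s x) y = k *s B x y"
proof (cases "k \<ge> 0")
  case True then show ?thesis using bilin_smult1_nat[OF assms, of "nat k"] by simp
next
  case False
  then have k: "k = - int (nat (-k))" by simp
  have "B (k *s x) y = B (- (int (nat (-k)) *s x)) y" using k neg_smult by metis
  also have "... = - (int (nat (-k)) *s B x y)" by (simp only: bilin_uminus1[OF assms] bilin_smult1_nat[OF assms])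
  also have "... = k *s B x y" using k neg_smult by metis
  finally show ?thesis .
qed
lemma bilin_smult2: assumes "bilin B" shows "B x (k *s y) = k *s B x y"
proof (cases "k \<ge> 0")
  case True then show ?thesis using bilin_smult2_nat[OF assms, where n="nat k"] by simp
next
  case False
  then have k: "k = - int (nat (-k))" by simp
  have "B x (k *s y) = B x (- (int (nat (-k)) *s y))" using k neg_smult by metis
  also have "... = - (int (nat (-k)) *s B x y)" by (simp only: bilin_uminus2[OF assms] bilin_smult2_nat[OF assms])
  also have "... = k *s B x y" using k neg_smult by metis
  finally show ?thesis .
qed
lemma bilin_add1: "bilin B \<Longrightarrow> B (x + y) z = B x z + B y z" by (simp add: bilin_def)
lemma bilin_add2: "bilin B \<Longrightarrow> B x (y + z) = B x y + B x z" by (simp add: bilin_def)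

lemma bilin_Bt: assumes "bilin B" "addb T" shows "bilin (Bt T B)"
  using assms addb_inv[OF assms(2)] by (simp add: bilin_def Bt_def addb_add)

lemma Bt_apply: "addb T \<Longrightarrow> Bt T B (T x) (T y) = T (B x y)"
  by (simp add: Bt_def addb_inv_f)

lemma addb_subgroup_iff: assumes "addb T" shows "add_subgroup (T ` M) \<longleftrightarrow> add_subgroup M"
proof
  assume h: "add_subgroup (T ` M)"
  show "add_subgroup M" unfolding add_subgroup_def
  proof (intro conjI ballI)
    show "0 \<in> M" using h subgroup_zero addb_zero[OF assms] addb_inj[OF assms]
      by (metis image_iff injD)
    fix x y assume "x \<in> M" "y \<in> M"
    then have "T x \<in> T ` M" "T y \<in> T ` M" by auto
    then have "T x + T y \<in> T ` M" "- T x \<in> T ` M" using subgroup_add[OF h] subgroup_uminus[OF h] by auto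
    then show "x + y \<in> M" "- x \<in> M" using addb_add[OF assms] addb_uminus[OF assms] addb_inj[OF assms]
      by (metis image_iff injD)+
  qed
next
  assume h: "add_subgroup M"
  show "add_subgroup (T ` M)" unfolding add_subgroup_def
    using h addb_zero[OF assms] addb_add[OF assms] addb_uminus[OF assms]
    by (auto simp: add_subgroup_def image_iff) (metis add_subgroup_def h)+
qed

lemma addb_subring_iff: assumes "addb T" shows "lie_subring (Bt T B) (T ` M) \<longleftrightarrow> lie_subring B M"
proof -
  have "(\<forall>x\<in>T ` M. \<forall>y\<in>T ` M. Bt T B x y \<in> T ` M) \<longleftrightarrow> (\<forall>x\<in>M. \<forall>y\<in>M. B x y \<in> M)"
    using Bt_apply[OF assms] addb_inj[OF assms] by (auto simp: inj_image_mem_iff)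
  then show ?thesis using addb_subgroup_iff[OF assms] by (simp add: lie_subring_def)
qed

lemma addb_ideal_iff: assumes "addb T" shows "lie_ideal (Bt T B) (T ` M) \<longleftrightarrow> lie_ideal B M"
proof -
  have "(\<forall>x. \<forall>y\<in>T ` M. Bt T B x y \<in> T ` M) \<longleftrightarrow> (\<forall>x. \<forall>y\<in>M. B x y \<in> M)"
  proof
    assume h: "\<forall>x. \<forall>y\<in>T ` M. Bt T B x y \<in> T ` M"
    show "\<forall>x. \<forall>y\<in>M. B x y \<in> M"
    proof (intro allI ballI)
      fix x y assume "y \<in> M"
      then have "Bt T B (T x) (T y) \<in> T ` M" using h by auto
      then show "B x y \<in> M" using Bt_apply[OF assms] addb_inj[OF assms] by (auto simp: inj_image_mem_iff)
    qed
  next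
    assume h: "\<forall>x. \<forall>y\<in>M. B x y \<in> M"
    show "\<forall>x. \<forall>y\<in>T ` M. Bt T B x y \<in> T ` M"
    proof (intro allI ballI)
      fix x y assume "y \<in> T ` M"
      then obtain y' where "y' \<in> M" "y = T y'" by auto
      moreover have "x = T (inv T x)" using addb_f_inv[OF assms] by simp
      ultimately show "Bt T B x y \<in> T ` M" using h Bt_apply[OF assms] by (metis image_eqI)
    qed
  qed
  then show ?thesis using addb_subgroup_iff[OF assms] by (simp add: lie_ideal_def)
qed

lemma addb_cosets: assumes "addb T" shows "cosets UNIV (T ` M) = (\<lambda>C. T ` C) ` cosets UNIV M"
proof -
  have e: "T ` ((\<lambda>m. x + m) ` M) = (\<lambda>m. T x + m) ` (T ` M)" for x
    using addb_add[OF assms] by (auto simp: image_iff)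
  show ?thesis unfolding cosets_def
  proof (auto simp: e)
    fix x show "(+) x ` T ` M \<in> (`) T ` {C. \<exists>x. C = (+) x ` M}"
    proof -
      have "(+) x ` T ` M = T ` ((+) (inv T x) ` M)" using e[of "inv T x"] addb_f_inv[OF assms] by simp
      then show ?thesis by blast
    qed
  next
    fix y show "\<exists>x. (+) (T y) ` T ` M = (+) x ` T ` M" by blast
  qed
qed

lemma addb_index: assumes "addb T" shows "add_index (T ` M) = add_index M"
proof -
  have "inj_on (\<lambda>C. T ` C) X" for X using addb_inj[OF assms] by (simp add: inj_on_def inj_image_eq_iff)
  then show ?thesis unfolding idx_UNIV idx_def addb_cosets[OF assms] by (simp add: card_image)
qed

lemma addb_count:
  assumes "addb T" and "\<And>M. P' (T ` M) \<longleftrightarrow> P M"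
  shows "card {M. P' M \<and> add_index M = n} = card {M. P M \<and> add_index M = n}"
proof -
  have inj: "inj_on (\<lambda>C. T ` C) X" for X using addb_inj[OF assms(1)] by (simp add: inj_on_def inj_image_eq_iff)
  have "{M. P' M \<and> add_index M = n} = (\<lambda>C. T ` C) ` {M. P M \<and> add_index M = n}"
  proof
    show "(\<lambda>C. T ` C) ` {M. P M \<and> add_index M = n} \<subseteq> {M. P' M \<and> add_index M = n}"
      using assms(2) addb_index[OF assms(1)] by auto
    show "{M. P' M \<and> add_index M = n} \<subseteq> (\<lambda>C. T ` C) ` {M. P M \<and> add_index M = n}"
    proof
      fix M assume "M \<in> {M. P' M \<and> add_index M = n}"
      then have h: "P' M" "add_index M = n" by auto
      have M: "M = T ` (inv T ` M)" using addb_f_inv[OF assms(1)] by (simp add: image_comp)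
      then have "P (inv T ` M)" "add_index (inv T ` M) = n" using h assms(2)[of "inv T ` M"] addb_index[OF assms(1), of "inv T ` M"] by auto
      then show "M \<in> (\<lambda>C. T ` C) ` {M. P M \<and> add_index M = n}" using M by blast
    qed
  qed
  then show ?thesis using inj by (simp add: card_image)
qed

lemma num_subrings_Bt: "addb T \<Longrightarrow> num_subrings (Bt T B) n = num_subrings B n"
  unfolding num_subrings_def by (rule addb_count) (auto simp: addb_subring_iff)
lemma num_ideals_Bt: "addb T \<Longrightarrow> num_ideals (Bt T B) n = num_ideals B n"
  unfolding num_ideals_def by (rule addb_count) (auto simp: addb_ideal_iff)

definition eop :: "'n \<Rightarrow> 'n \<Rightarrow> int \<Rightarrow> int^'n \<Rightarrow> int^'n" where
  "eop i j k v = (\<chi> l. if l = j then v$j + k * v$i else v$l)"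

lemma eop_comp: "(eop i j k v)$l = (if l = j then v$j + k * v$i else v$l)"
  by (simp add: eop_def)

lemma eop_inv: "i \<noteq> j \<Longrightarrow> eop i j (-k) (eop i j k v) = v"
  by (simp add: vec_eq_iff eop_comp)

lemma addb_eop: assumes "i \<noteq> j" shows "addb (eop i j k)"
proof -
  have "bij (eop i j k)"
    by (rule bij_betw_byWitness[where f'="eop i j (-k)"]) (auto simp: eop_inv assms eop_inv[of i j "-k", simplified, OF assms])
  moreover have "eop i j k (u+v) = eop i j k u + eop i j k v" for u v
    by (simp add: vec_eq_iff eop_comp algebra_simps)
  ultimately show ?thesis by (simp add: addb_def)
qed

lemma reduce_aux:
  fixes J :: "'n::finite set"
  shows "\<And>v::int^'n. (\<Sum>l\<in>J. nat \<bar>v$l\<bar>) = m \<Longrightarrow> (\<exists>i\<in>J. v$i \<noteq> 0) \<Longrightarrow>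
     \<exists>T c. addb T \<and> (\<forall>u l. l \<notin> J \<longrightarrow> (T u)$l = u$l) \<and> (\<forall>u. (\<forall>l\<in>J. u$l = 0) \<longrightarrow> T u = u)
        \<and> c \<in> J \<and> (T v)$c \<noteq> 0 \<and> (\<forall>l\<in>J. l \<noteq> c \<longrightarrow> (T v)$l = 0)"
proof (induction m rule: less_induct)
  case (less m v)
  show ?case
  proof (cases "\<exists>i j. i \<in> J \<and> j \<in> J \<and> i \<noteq> j \<and> v$i \<noteq> 0 \<and> v$j \<noteq> 0 \<and> \<bar>v$i\<bar> \<le> \<bar>v$j\<bar>")
    case True
    then obtain i j where ij: "i \<in> J" "j \<in> J" "i \<noteq> j" "v$i \<noteq> 0" "v$j \<noteq> 0" "\<bar>v$i\<bar> \<le> \<bar>v$j\<bar>" by blast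
    define k where "k = - sgn (v$i) * sgn (v$j)"
    define v' where "v' = eop i j k v"
    have vj: "\<bar>v'$j\<bar> = \<bar>v$j\<bar> - \<bar>v$i\<bar>"
      using ij by (auto simp: v'_def eop_comp k_def sgn_if abs_if)
    have vl: "l \<noteq> j \<Longrightarrow> v'$l = v$l" for l by (simp add: v'_def eop_comp)
    have fin: "finite J" by simp
    have "(\<Sum>l\<in>J. nat \<bar>v'$l\<bar>) = nat \<bar>v'$j\<bar> + (\<Sum>l\<in>J-{j}. nat \<bar>v'$l\<bar>)"
      using ij(2) by (simp add: sum.remove)
    also have "(\<Sum>l\<in>J-{j}. nat \<bar>v'$l\<bar>) = (\<Sum>l\<in>J-{j}. nat \<bar>v$l\<bar>)" using vl by simp
    finally have s1: "(\<Sum>l\<in>J. nat \<bar>v'$l\<bar>) = nat \<bar>v'$j\<bar> + (\<Sum>l\<in>J-{j}. nat \<bar>v$l\<bar>)" .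
    have s2: "(\<Sum>l\<in>J. nat \<bar>v$l\<bar>) = nat \<bar>v$j\<bar> + (\<Sum>l\<in>J-{j}. nat \<bar>v$l\<bar>)"
      using ij(2) by (simp add: sum.remove)
    have lt: "(\<Sum>l\<in>J. nat \<bar>v'$l\<bar>) < m" using s1 s2 vj ij less.prems(1) by linarith
    have nz: "\<exists>i\<in>J. v'$i \<noteq> 0" using ij vl[of i] by metis
    obtain T c where T: "addb T" "\<forall>u l. l \<notin> J \<longrightarrow> (T u)$l = u$l" "\<forall>u. (\<forall>l\<in>J. u$l = 0) \<longrightarrow> T u = u"
        "c \<in> J" "(T v')$c \<noteq> 0" "\<forall>l\<in>J. l \<noteq> c \<longrightarrow> (T v')$l = 0"
      using less.IH[OF lt refl nz] by blast
    show ?thesis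
    proof (intro exI conjI)
      show "addb (T \<circ> eop i j k)" using T(1) addb_eop[OF ij(3)] addb_comp by blast
      show "\<forall>u l. l \<notin> J \<longrightarrow> ((T \<circ> eop i j k) u)$l = u$l"
        using T(2) ij by (auto simp: eop_comp)
      show "\<forall>u. (\<forall>l\<in>J. u$l = 0) \<longrightarrow> (T \<circ> eop i j k) u = u"
      proof (intro allI impI)
        fix u :: "int^'n" assume h: "\<forall>l\<in>J. u$l = 0"
        have "eop i j k u = u" using h ij by (simp add: vec_eq_iff eop_comp)
        then show "(T \<circ> eop i j k) u = u" using T(3) h by simp
      qed
      show "c \<in> J" by fact
      show "((T \<circ> eop i j k) v)$c \<noteq> 0" using T(5) by (simp add: v'_def)
      show "\<forall>l\<in>J. l \<noteq> c \<longrightarrow> ((T \<circ> eop i j k) v)$l = 0" using T(6) by (simp add: v'_def)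
    qed
  next
    case False
    obtain c where c: "c \<in> J" "v$c \<noteq> 0" using less.prems(2) by blast
    have others: "\<forall>l\<in>J. l \<noteq> c \<longrightarrow> v$l = 0"
    proof (intro ballI impI, rule ccontr)
      fix l assume "l \<in> J" "l \<noteq> c" "v$l \<noteq> 0"
      then show False using False c
        by (cases "\<bar>v$l\<bar> \<le> \<bar>v$c\<bar>") (metis, metis linorder_le_cases)
    qed
    show ?thesis
      by (rule exI[of _ id], rule exI[of _ c]) (use c others addb_id in \<open>auto simp: id_def\<close>)
  qed
qed

lemma reduce:
  fixes J :: "'n::finite set" and v :: "int^'n"
  assumes "\<exists>i\<in>J. v$i \<noteq> 0"
  shows "\<exists>T c. addb T \<and> (\<forall>u l. l \<notin> J \<longrightarrow> (T u)$l = u$l) \<and> (\<forall>u. (\<forall>l\<in>J. u$l = 0) \<longrightarrow> T u = u)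
        \<and> c \<in> J \<and> (T v)$c \<noteq> 0 \<and> (\<forall>l\<in>J. l \<noteq> c \<longrightarrow> (T v)$l = 0)"
  using reduce_aux[OF refl assms] .

definition altn :: "(int^'n \<Rightarrow> int^'n \<Rightarrow> int^'n) \<Rightarrow> bool" where
  "altn B \<longleftrightarrow> (\<forall>u. B u u = 0)"

lemma altn_Bt: "addb T \<Longrightarrow> altn B \<Longrightarrow> altn (Bt T B)"
  by (simp add: altn_def Bt_def addb_zero)

lemma smult_eq0: "(t::int) \<noteq> 0 \<Longrightarrow> t *s z = 0 \<Longrightarrow> z = 0"
  by (simp add: vec_eq_iff)

lemma smult_ev_neq0: "(t::int) \<noteq> 0 \<Longrightarrow> t *s ev a \<noteq> 0"
  by (auto simp: vec_eq_iff)

lemma Bt_central: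
  assumes "addb T" "\<forall>v. B z v = 0" "\<forall>v. B v z = 0"
  shows "\<forall>v. Bt T B (T z) v = 0" "\<forall>v. Bt T B v (T z) = 0"
  using assms by (auto simp: Bt_def addb_inv_f addb_zero)

lemma vec_supp1: "\<forall>l. l \<noteq> a \<longrightarrow> v$l = 0 \<Longrightarrow> v = (v$a) *s ev a"
  by (auto simp: vec_eq_iff)
lemma vec_supp2: "a \<noteq> b \<Longrightarrow> \<forall>l. l \<noteq> a \<and> l \<noteq> b \<longrightarrow> v$l = 0 \<Longrightarrow> v = (v$a) *s ev a + (v$b) *s ev b"
  by (auto simp: vec_eq_iff)
lemma vec_supp3: "a \<noteq> b \<Longrightarrow> a \<noteq> c \<Longrightarrow> b \<noteq> c \<Longrightarrow> \<forall>l. l \<noteq> a \<and> l \<noteq> b \<and> l \<noteq> c \<longrightarrow> v$l = 0 \<Longrightarrow>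
   v = (v$a) *s ev a + (v$b) *s ev b + (v$c) *s ev c"
  by (auto simp: vec_eq_iff)

lemma normal_form:
  fixes B :: "int^'n \<Rightarrow> int^'n \<Rightarrow> int^'n"
  assumes bl: "bilin B" and al: "altn B" and w: "B x y \<noteq> 0"
    and cen1: "\<forall>u. B u (B x y) = 0" and cen2: "\<forall>u. B (B x y) u = 0"
  shows "\<exists>B'::int^'n \<Rightarrow> int^'n \<Rightarrow> int^'n. (\<forall>n. num_subrings B' n = num_subrings B n) \<and> (\<forall>n. num_ideals B' n = num_ideals B n)
     \<and> bilin B' \<and> altn B' \<and> (\<exists>a b c \<tau>. a \<noteq> b \<and> a \<noteq> c \<and> b \<noteq> c \<and> \<tau> \<noteq> 0 \<and>
        (\<forall>v. B' (ev a) v = 0) \<and> (\<forall>v. B' v (ev a) = 0) \<and> B' (ev b) (ev c) = \<tau> *s ev a)"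
proof -
  define w where "w = B x y"
  have "\<exists>i\<in>UNIV. w$i \<noteq> 0" using w by (auto simp: w_def vec_eq_iff)
  then obtain T1 a where T1: "addb T1" "(T1 w)$a \<noteq> 0" "\<forall>l. l \<noteq> a \<longrightarrow> (T1 w)$l = 0"
    using reduce[of UNIV w] by auto
  define t1 where "t1 = (T1 w)$a"
  have T1w: "T1 w = t1 *s ev a" using vec_supp1[of a "T1 w"] T1 by (simp add: t1_def)
  define B1 where "B1 = Bt T1 B"
  have bl1: "bilin B1" and al1: "altn B1" using bilin_Bt[OF bl T1(1)] altn_Bt[OF T1(1) al] by (simp_all add: B1_def)
  have c1: "\<forall>v. B1 (t1 *s ev a) v = 0" "\<forall>v. B1 v (t1 *s ev a) = 0"
    using Bt_central[OF T1(1), of B w] cen1 cen2 T1w by (simp_all add: B1_def w_def)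
  have t1: "t1 \<noteq> 0" using T1 by (simp add: t1_def)
  have ca1a: "B1 (ev a) v = 0" for v
  proof -
    have "t1 *s B1 (ev a) v = 0" using c1(1) bilin_smult1[OF bl1, of t1 "ev a" v] by simp
    then show "B1 (ev a) v = 0" using smult_eq0[OF t1] by blast
  qed
  have ca1b: "B1 v (ev a) = 0" for v
  proof -
    have "t1 *s B1 v (ev a) = 0" using c1(2) bilin_smult2[OF bl1, of v t1 "ev a"] by simp
    then show "B1 v (ev a) = 0" using smult_eq0[OF t1] by blast
  qed
  have ca1: "\<forall>v. B1 (ev a) v = 0" "\<forall>v. B1 v (ev a) = 0" using ca1a ca1b by auto
  define x1 where "x1 = T1 x"
  define y1 where "y1 = T1 y"
  have B1xy: "B1 x1 y1 = t1 *s ev a" using Bt_apply[OF T1(1)] T1w by (simp add: B1_def x1_def y1_def w_def)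
  have "\<exists>i\<in>-{a}. x1$i \<noteq> 0"
  proof (rule ccontr)
    assume "\<not> ?thesis"
    then have "x1 = (x1$a) *s ev a" using vec_supp1[of a x1] by auto
    then have "B1 x1 y1 = (x1$a) *s B1 (ev a) y1" using bilin_smult1[OF bl1] by metis
    then have "B1 x1 y1 = 0" using ca1 by simp
    then show False using B1xy smult_ev_neq0[OF t1, of a] by metis
  qed
  then obtain T2 b where T2: "addb T2" "\<forall>u l. l \<notin> -{a} \<longrightarrow> (T2 u)$l = u$l"
    "\<forall>u. (\<forall>l\<in>-{a}. u$l = 0) \<longrightarrow> T2 u = u" "b \<in> -{a}" "(T2 x1)$b \<noteq> 0"
    "\<forall>l\<in>-{a}. l \<noteq> b \<longrightarrow> (T2 x1)$l = 0"
    using reduce[of "-{a}" x1] by blast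
  have ab: "a \<noteq> b" using T2(4) by auto
  have T2a: "T2 (ev a) = ev a" using T2(3) by auto
  have T2ta: "T2 (t1 *s ev a) = t1 *s ev a" using T2(3) by auto
  define B2 where "B2 = Bt T2 B1"
  have bl2: "bilin B2" and al2: "altn B2" using bilin_Bt[OF bl1 T2(1)] altn_Bt[OF T2(1) al1] by (simp_all add: B2_def)
  have ca2: "\<forall>v. B2 (ev a) v = 0" "\<forall>v. B2 v (ev a) = 0"
    using Bt_central[OF T2(1), of B1 "ev a"] ca1 T2a by (simp_all add: B2_def)
  define x2 where "x2 = T2 x1"
  define y2 where "y2 = T2 y1"
  have B2xy: "B2 x2 y2 = t1 *s ev a" using Bt_apply[OF T2(1)] B1xy T2ta by (simp add: B2_def x2_def y2_def)
  define p where "p = x2$b"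
  have p: "p \<noteq> 0" using T2 by (simp add: p_def x2_def)
  define \<alpha> where "\<alpha> = x2$a"
  have x2e: "x2 = \<alpha> *s ev a + p *s ev b"
    using vec_supp2[OF ab, of x2] T2(6) by (auto simp: p_def x2_def \<alpha>_def)
  have Bexp2: "B2 x2 v = p *s B2 (ev b) v" for v
  proof -
    have "B2 x2 v = \<alpha> *s B2 (ev a) v + p *s B2 (ev b) v"
      using x2e by (simp add: bilin_add1[OF bl2] bilin_smult1[OF bl2])
    then show ?thesis using ca2 by simp
  qed
  have "\<exists>i\<in>-{a,b}. y2$i \<noteq> 0"
  proof (rule ccontr)
    assume "\<not> ?thesis"
    then have "y2 = (y2$a) *s ev a + (y2$b) *s ev b" using vec_supp2[OF ab, of y2] by auto
    then have "B2 (ev b) y2 = B2 (ev b) ((y2$a) *s ev a + (y2$b) *s ev b)" by metis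
    also have "\<dots> = (y2$a) *s B2 (ev b) (ev a) + (y2$b) *s B2 (ev b) (ev b)"
      by (simp only: bilin_add2[OF bl2] bilin_smult2[OF bl2])
    finally have "B2 (ev b) y2 = (y2$a) *s B2 (ev b) (ev a) + (y2$b) *s B2 (ev b) (ev b)" .
    then have "B2 (ev b) y2 = 0" using ca2 al2 by (simp add: altn_def)
    then have "B2 x2 y2 = 0" using Bexp2 by (simp add: vec_eq_iff)
    then show False using B2xy smult_ev_neq0[OF t1, of a] by metis
  qed
  then obtain T3 c where T3: "addb T3" "\<forall>u l. l \<notin> -{a,b} \<longrightarrow> (T3 u)$l = u$l"
    "\<forall>u. (\<forall>l\<in>-{a,b}. u$l = 0) \<longrightarrow> T3 u = u" "c \<in> -{a,b}" "(T3 y2)$c \<noteq> 0"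
    "\<forall>l\<in>-{a,b}. l \<noteq> c \<longrightarrow> (T3 y2)$l = 0"
    using reduce[of "-{a,b}" y2] by blast
  have ac: "a \<noteq> c" and bc: "b \<noteq> c" using T3(4) by auto
  have T3a: "T3 (ev a) = ev a" "T3 (ev b) = ev b" using T3(3) ab by auto
  have T3x: "T3 x2 = x2" using T3(3) x2e ab by (auto simp: vec_eq_iff)
  have T3ta: "T3 (t1 *s ev a) = t1 *s ev a" using T3(3) by auto
  define B3 where "B3 = Bt T3 B2"
  have bl3: "bilin B3" and al3: "altn B3" using bilin_Bt[OF bl2 T3(1)] altn_Bt[OF T3(1) al2] by (simp_all add: B3_def)
  have ca3: "\<forall>v. B3 (ev a) v = 0" "\<forall>v. B3 v (ev a) = 0"
    using Bt_central[OF T3(1), of B2 "ev a"] ca2 T3a by (simp_all add: B3_def)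
  define y3 where "y3 = T3 y2"
  have B3xy: "B3 x2 y3 = t1 *s ev a" using Bt_apply[OF T3(1), of B2 x2 y2] B2xy T3ta T3x by (simp add: B3_def y3_def)
  define r where "r = y3$c"
  have r: "r \<noteq> 0" using T3 by (simp add: r_def y3_def)
  define \<beta> where "\<beta> = y3$a"
  define \<gamma> where "\<gamma> = y3$b"
  have y3e: "y3 = \<beta> *s ev a + \<gamma> *s ev b + r *s ev c"
    using vec_supp3[OF ab ac bc, of y3] T3(6) by (auto simp: r_def y3_def \<beta>_def \<gamma>_def)
  have Bexp3: "B3 x2 v = p *s B3 (ev b) v" for v
  proof -
    have "B3 x2 v = \<alpha> *s B3 (ev a) v + p *s B3 (ev b) v"
      using x2e by (simp add: bilin_add1[OF bl3] bilin_smult1[OF bl3])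
    then show ?thesis using ca3 by simp
  qed
  have "B3 (ev b) y3 = \<beta> *s B3 (ev b) (ev a) + \<gamma> *s B3 (ev b) (ev b) + r *s B3 (ev b) (ev c)"
    using y3e by (simp add: bilin_add2[OF bl3] bilin_smult2[OF bl3])
  then have "B3 (ev b) y3 = r *s B3 (ev b) (ev c)" using ca3 al3 by (simp add: altn_def)
  then have key: "(p * r) *s B3 (ev b) (ev c) = t1 *s ev a"
    using B3xy Bexp3 by (simp add: vector_smult_assoc)
  define \<tau> where "\<tau> = (B3 (ev b) (ev c))$a"
  have comp: "p * r * (B3 (ev b) (ev c))$l = (if l = a then t1 else 0)" for l
  proof -
    have "((p * r) *s B3 (ev b) (ev c))$l = (t1 *s ev a)$l" using key by simp
    then show ?thesis by (simp add: mult.assoc)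
  qed
  have Bbc: "B3 (ev b) (ev c) = \<tau> *s ev a"
  proof -
    have "(B3 (ev b) (ev c))$l = 0" if "l \<noteq> a" for l using comp[of l] that p r by simp
    then show ?thesis using vec_supp1[of a "B3 (ev b) (ev c)"] by (simp add: \<tau>_def)
  qed
  have tau: "\<tau> \<noteq> 0" using comp[of a] t1 by (auto simp: \<tau>_def)
  have n1: "\<forall>n. num_subrings B3 n = num_subrings B n"
    by (simp add: B3_def B2_def B1_def num_subrings_Bt T1(1) T2(1) T3(1))
  have n2: "\<forall>n. num_ideals B3 n = num_ideals B n"
    by (simp add: B3_def B2_def B1_def num_ideals_Bt T1(1) T2(1) T3(1))
  show ?thesis
    apply (rule exI[of _ B3])
    apply (intro conjI n1 n2 bl3 al3)
    apply (rule exI[of _ a], rule exI[of _ b], rule exI[of _ c], rule exI[of _ \<tau>])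
    using ab ac bc tau ca3 Bbc by blast
qed

lemma coset_in: "x \<in> VV J \<Longrightarrow> (\<lambda>m. x + m) ` M \<in> cosets J M"
  by (auto simp: cosets_def)

lemma coset_eq_iff: assumes "add_subgroup M"
  shows "(\<lambda>m. x + m) ` M = (\<lambda>m. y + m) ` M \<longleftrightarrow> x - y \<in> M"
proof
  assume h: "(\<lambda>m. x + m) ` M = (\<lambda>m. y + m) ` M"
  have "x \<in> (\<lambda>m. x + m) ` M" using subgroup_zero[OF assms] by force
  then obtain m where "m \<in> M" "x = y + m" using h by auto
  then show "x - y \<in> M" by simp
next
  assume h: "x - y \<in> M"
  show "(\<lambda>m. x + m) ` M = (\<lambda>m. y + m) ` M"
  proof (auto simp: image_iff)
    fix m assume "m \<in> M"
    then have "(x - y) + m \<in> M" using subgroup_add[OF assms h] by simp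
    moreover have "x + m = y + ((x - y) + m)" by simp
    ultimately show "\<exists>m'\<in>M. x + m = y + m'" by blast
  next
    fix m assume "m \<in> M"
    then have "m - (x - y) \<in> M" using subgroup_diff[OF assms _ h] by simp
    moreover have "y + m = x + (m - (x - y))" by simp
    ultimately show "\<exists>m'\<in>M. y + m = x + m'" by blast
  qed
qed

lemma fin_mult:
  assumes "M \<in> Gs J" "j \<in> J" shows "\<exists>k>0. int k *s ev j \<in> M"
proof -
  have sg: "add_subgroup M" and fin: "finite (cosets J M)" using assms by (auto simp: Gs_def)
  define N where "N = card (cosets J M)"
  define f where "f r = (\<lambda>m. int r *s ev j + m) ` M" for r :: nat
  have sub: "f ` {0..N} \<subseteq> cosets J M"
    using assms(2) by (auto simp: f_def intro!: coset_in VV_smult VV_ev)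
  have "\<not> inj_on f {0..N}"
  proof
    assume "inj_on f {0..N}"
    then have "card (f ` {0..N}) = N + 1" by (simp add: card_image)
    moreover have "card (f ` {0..N}) \<le> N" using card_mono[OF fin sub] by (simp add: N_def)
    ultimately show False by simp
  qed
  then obtain r1 r2 where r: "r1 \<noteq> r2" "f r1 = f r2" by (auto simp: inj_on_def)
  have "int r1 *s ev j \<in> f r1" using subgroup_zero[OF sg] by (force simp: f_def)
  then have "int r1 *s ev j \<in> f r2" using r by simp
  then obtain m where m: "m \<in> M" "int r1 *s ev j = int r2 *s ev j + m" by (auto simp: f_def)
  have "m = int r1 *s ev j - int r2 *s ev j" using m(2) by (simp add: algebra_simps)
  also have "\<dots> = (int r1 - int r2) *s ev j" by (simp add: vec_eq_iff algebra_simps)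
  finally have m1: "(int r1 - int r2) *s ev j \<in> M" using m(1) by simp
  have m2: "(int r2 - int r1) *s ev j \<in> M"
  proof -
    have "(int r2 - int r1) *s ev j = - ((int r1 - int r2) *s ev j)" by (simp add: vec_eq_iff algebra_simps)
    then show ?thesis using subgroup_uminus[OF sg m1] by simp
  qed
  show ?thesis
  proof (cases "r2 < r1")
    case True
    then show ?thesis using m1 by (intro exI[of _ "r1 - r2"]) (auto simp: of_nat_diff)
  next
    case False
    then have "r1 < r2" using r by simp
    then show ?thesis using m2 by (intro exI[of _ "r2 - r1"]) (auto simp: of_nat_diff)
  qed
qed

lemma dco_props:
  assumes "\<exists>k>0. int k *s ev j \<in> N"
  shows "0 < dco j N" "\<exists>v\<in>N. v$j = int (dco j N)"
proof -
  obtain k where k: "k > 0" "int k *s ev j \<in> N" using assms by blast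
  have ex: "\<exists>d. 0 < d \<and> (\<exists>v\<in>N. v$j = int d)" using k by (intro exI[of _ k]) force
  have "0 < dco j N \<and> (\<exists>v\<in>N. v$j = int (dco j N))"
    unfolding dco_def by (rule LeastI_ex[OF ex])
  then show "0 < dco j N" "\<exists>v\<in>N. v$j = int (dco j N)" by auto
qed

lemma dco_dvd:
  assumes sg: "add_subgroup N" and ex: "\<exists>k>0. int k *s ev j \<in> N" and u: "u \<in> N"
  shows "int (dco j N) dvd u$j"
proof -
  define d where "d = dco j N"
  have d0: "0 < d" using dco_props(1)[OF ex] by (simp add: d_def)
  obtain w where w: "w \<in> N" "w$j = int d" using dco_props(2)[OF ex] by (auto simp: d_def)
  define q where "q = u$j div int d"
  define r where "r = u$j mod int d"
  have r: "0 \<le> r" "r < int d" using d0 by (auto simp: r_def)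
  have inN: "u - q *s w \<in> N" using subgroup_diff[OF sg u subgroup_smult[OF sg w(1)]] .
  have eq: "(u - q *s w)$j = r" using w by (simp add: q_def r_def mod_div_mult_eq minus_div_mult_eq_mod)
  have rw: "\<exists>v\<in>N. v$j = int (nat r)"
  proof (rule bexI[OF _ inN])
    show "(u - q *s w)$j = int (nat r)" using eq r by simp
  qed
  have "r = 0"
  proof (rule ccontr)
    assume "r \<noteq> 0"
    then have "0 < nat r" using r by simp
    then have "d \<le> nat r" unfolding d_def dco_def using rw by (intro Least_le) auto
    then show False using r by simp
  qed
  then show ?thesis by (simp add: r_def d_def dvd_eq_mod_eq_0)
qed

lemma Gs_finite_mult: "M \<in> Gs J \<Longrightarrow> j \<in> K \<Longrightarrow> K \<subseteq> J \<Longrightarrow> \<exists>k>0. int k *s ev j \<in> M \<inter> VV K"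
  using fin_mult[of M J j] by (auto intro!: VV_smult VV_ev)

lemma M_Int_VV_cosets:
  assumes "M \<in> Gs J'" "J \<subseteq> J'"
  shows "M \<inter> VV J \<in> Gs J" "card (cosets J (M \<inter> VV J)) \<le> card (cosets J' M)"
proof -
  have sg: "add_subgroup M" and fin: "finite (cosets J' M)" and MV: "M \<subseteq> VV J'" using assms by (auto simp: Gs_def)
  have sg': "add_subgroup (M \<inter> VV J)" by (rule subgroup_Int[OF sg subgroup_VV])
  define F where "F C = {c + m | c m. c \<in> C \<and> m \<in> M}" for C
  have Fx: "F ((\<lambda>m. x + m) ` (M \<inter> VV J)) = (\<lambda>m. x + m) ` M" for x
  proof
    show "F ((+) x ` (M \<inter> VV J)) \<subseteq> (+) x ` M"
      by (auto simp: F_def image_iff) (metis add.assoc sg subgroup_add)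
    show "(+) x ` M \<subseteq> F ((+) x ` (M \<inter> VV J))"
    proof
      fix y assume "y \<in> (+) x ` M"
      then obtain m where "m \<in> M" "y = x + m" by auto
      moreover have "x + 0 \<in> (+) x ` (M \<inter> VV J)" using subgroup_zero[OF sg] by auto
      ultimately show "y \<in> F ((+) x ` (M \<inter> VV J))" unfolding F_def by force
    qed
  qed
  have inj: "inj_on F (cosets J (M \<inter> VV J))"
  proof (rule inj_onI)
    fix C D assume C: "C \<in> cosets J (M \<inter> VV J)" and D: "D \<in> cosets J (M \<inter> VV J)" and e: "F C = F D"
    obtain x where x: "x \<in> VV J" "C = (+) x ` (M \<inter> VV J)" using C by (auto simp: cosets_def)
    obtain y where y: "y \<in> VV J" "D = (+) y ` (M \<inter> VV J)" using D by (auto simp: cosets_def)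
    have "(+) x ` M = (+) y ` M" using e x y Fx by simp
    then have "x - y \<in> M" using coset_eq_iff[OF sg] by simp
    moreover have "x - y \<in> VV J" using x y VV_diff by blast
    ultimately have "x - y \<in> M \<inter> VV J" by simp
    then show "C = D" using x y coset_eq_iff[OF sg'] by simp
  qed
  have img: "F ` cosets J (M \<inter> VV J) \<subseteq> cosets J' M"
  proof
    fix E assume "E \<in> F ` cosets J (M \<inter> VV J)"
    then obtain x where x: "x \<in> VV J" "E = F ((+) x ` (M \<inter> VV J))" by (auto simp: cosets_def)
    then show "E \<in> cosets J' M" using Fx VV_mono[OF assms(2)] by (auto intro!: coset_in)
  qed
  have fin2: "finite (cosets J (M \<inter> VV J))" using inj img fin by (metis finite_imageD finite_subset)
  show "card (cosets J (M \<inter> VV J)) \<le> card (cosets J' M)"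
    using card_mono[OF fin img] card_image[OF inj] by simp
  show "M \<inter> VV J \<in> Gs J" using sg' fin2 by (auto simp: Gs_def)
qed

definition Cm :: "'n \<Rightarrow> 'n set \<Rightarrow> (int^'n) set \<Rightarrow> (int^'n) set" where
  "Cm j J M = {w \<in> VV J. int (dco j M) *s ev j + w \<in> M}"

lemma small_dvd: assumes "int d dvd int r - int s" "r < d" "s < d" shows "r = s"
proof -
  obtain k where k: "int r - int s = int d * k" using assms(1) by (auto simp: dvd_def)
  have "k = 0"
  proof (rule ccontr)
    assume "k \<noteq> 0"
    then have "1 \<le> \<bar>k\<bar>" by simp
    then have "int d \<le> int d * \<bar>k\<bar>" using mult_left_mono[of 1 "\<bar>k\<bar>" "int d"] by simp
    also have "\<dots> = \<bar>int r - int s\<bar>" by (simp add: k abs_mult)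
    finally show False using assms by simp
  qed
  then show "r = s" using k by simp
qed

locale stepctx =
  fixes j :: "'n::finite" and J :: "'n set" and M :: "(int^'n) set"
  assumes jJ: "j \<notin> J" and MG: "M \<in> Gs (insert j J)"
begin

lemma sg: "add_subgroup M" using MG by (simp add: Gs_def)
lemma MV: "M \<subseteq> VV (insert j J)" using MG by (simp add: Gs_def)
lemma exj: "\<exists>k>0. int k *s ev j \<in> M" using fin_mult[OF MG] by simp
lemma d0: "0 < dco j M" using dco_props(1)[OF exj] .
lemma dw: "\<exists>v\<in>M. v$j = int (dco j M)" using dco_props(2)[OF exj] .
lemma ddvd: "u \<in> M \<Longrightarrow> int (dco j M) dvd u$j" using dco_dvd[OF sg exj] .
lemma sg': "add_subgroup (M \<inter> VV J)" by (rule subgroup_Int[OF sg subgroup_VV])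
lemma MG': "M \<inter> VV J \<in> Gs J" using M_Int_VV_cosets[OF MG] by auto
lemma fin': "finite (cosets J (M \<inter> VV J))" using MG' by (simp add: Gs_def)
lemma fin: "finite (cosets (insert j J) M)" using MG by (simp add: Gs_def)

lemma VV_j0: "v \<in> VV (insert j J) \<Longrightarrow> v$j = 0 \<Longrightarrow> v \<in> VV J"
  by (auto simp: VV_def)

lemma Cm_coset: "Cm j J M \<in> cosets J (M \<inter> VV J)"
proof -
  obtain v0 where v0: "v0 \<in> M" "v0$j = int (dco j M)" using dw by blast
  define w0 where "w0 = v0 - int (dco j M) *s ev j"
  have w0V: "w0 \<in> VV J" using v0 MV jJ by (intro VV_j0) (auto simp: w0_def intro!: VV_diff VV_smult VV_ev)
  have "Cm j J M = (+) w0 ` (M \<inter> VV J)"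
  proof
    show "Cm j J M \<subseteq> (+) w0 ` (M \<inter> VV J)"
    proof
      fix w assume "w \<in> Cm j J M"
      then have w: "w \<in> VV J" "int (dco j M) *s ev j + w \<in> M" by (auto simp: Cm_def)
      have "w - w0 = (int (dco j M) *s ev j + w) - v0" by (simp add: w0_def)
      then have "w - w0 \<in> M" using subgroup_diff[OF sg w(2) v0(1)] by metis
      moreover have "w - w0 \<in> VV J" using w w0V VV_diff by blast
      ultimately show "w \<in> (+) w0 ` (M \<inter> VV J)" by (intro image_eqI[of _ _ "w - w0"]) auto
    qed
    show "(+) w0 ` (M \<inter> VV J) \<subseteq> Cm j J M"
    proof
      fix w assume "w \<in> (+) w0 ` (M \<inter> VV J)"
      then obtain m where m: "m \<in> M" "m \<in> VV J" "w = w0 + m" by auto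
      have "int (dco j M) *s ev j + w = v0 + m" using m by (simp add: w0_def)
      then have "int (dco j M) *s ev j + w \<in> M" using subgroup_add[OF sg v0(1) m(1)] by simp
      moreover have "w \<in> VV J" using m w0V VV_add by blast
      ultimately show "w \<in> Cm j J M" by (simp add: Cm_def)
    qed
  qed
  then show ?thesis using w0V by (auto simp: cosets_def)
qed

lemma idx_ge: "idx J (M \<inter> VV J) * dco j M \<le> idx (insert j J) M"
proof -
  define d where "d = dco j M"
  define F where "F p = {c + int (snd p) *s ev j + m | c m. c \<in> fst p \<and> m \<in> M}" for p :: "(int^'n) set \<times> nat"
  have Fx: "F ((+) x ` (M \<inter> VV J), r) = (+) (x + int r *s ev j) ` M" for x r
  proof
    show "F ((+) x ` (M \<inter> VV J), r) \<subseteq> (+) (x + int r *s ev j) ` M"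
    proof
      fix y assume "y \<in> F ((+) x ` (M \<inter> VV J), r)"
      then obtain m1 m where "m1 \<in> M" "m \<in> M" "y = x + m1 + int r *s ev j + m" by (auto simp: F_def)
      moreover then have "m1 + m \<in> M" using subgroup_add[OF sg] by simp
      ultimately show "y \<in> (+) (x + int r *s ev j) ` M" by (intro image_eqI[of _ _ "m1 + m"]) (auto simp: algebra_simps)
    qed
    show "(+) (x + int r *s ev j) ` M \<subseteq> F ((+) x ` (M \<inter> VV J), r)"
    proof
      fix y assume "y \<in> (+) (x + int r *s ev j) ` M"
      then obtain m where m: "m \<in> M" "y = x + int r *s ev j + m" by auto
      have "x + 0 \<in> (+) x ` (M \<inter> VV J)" using subgroup_zero[OF sg] by auto
      then show "y \<in> F ((+) x ` (M \<inter> VV J), r)" using m unfolding F_def by force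
    qed
  qed
  have inj: "inj_on F (cosets J (M \<inter> VV J) \<times> {0..<d})"
  proof (rule inj_onI)
    fix p q assume p: "p \<in> cosets J (M \<inter> VV J) \<times> {0..<d}" and q: "q \<in> cosets J (M \<inter> VV J) \<times> {0..<d}" and e: "F p = F q"
    obtain x r where x: "x \<in> VV J" "p = ((+) x ` (M \<inter> VV J), r)" "r < d" using p by (auto simp: cosets_def)
    obtain y s where y: "y \<in> VV J" "q = ((+) y ` (M \<inter> VV J), s)" "s < d" using q by (auto simp: cosets_def)
    have "(+) (x + int r *s ev j) ` M = (+) (y + int s *s ev j) ` M" using e x y Fx by simp
    then have diff: "(x + int r *s ev j) - (y + int s *s ev j) \<in> M" using coset_eq_iff[OF sg] by simp
    have "x$j = 0" "y$j = 0" using x y jJ by (auto simp: VV_def)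
    then have "((x + int r *s ev j) - (y + int s *s ev j))$j = int r - int s" by simp
    then have "int d dvd int r - int s" using ddvd[OF diff] by (simp add: d_def)
    then have rs: "r = s" using x(3) y(3) small_dvd by blast
    have "x - y \<in> M" using diff rs by simp
    moreover have "x - y \<in> VV J" using x y VV_diff by blast
    ultimately have "x - y \<in> M \<inter> VV J" by simp
    then show "p = q" using x y rs coset_eq_iff[OF sg'] by simp
  qed
  have img: "F ` (cosets J (M \<inter> VV J) \<times> {0..<d}) \<subseteq> cosets (insert j J) M"
  proof
    fix E assume "E \<in> F ` (cosets J (M \<inter> VV J) \<times> {0..<d})"
    then obtain x r where x: "x \<in> VV J" "E = F ((+) x ` (M \<inter> VV J), r)" by (auto simp: cosets_def)
    have "x + int r *s ev j \<in> VV (insert j J)"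
      using x VV_mono[of J "insert j J"] by (auto intro!: VV_add VV_smult VV_ev)
    then show "E \<in> cosets (insert j J) M" using x Fx coset_in by metis
  qed
  have "card (cosets J (M \<inter> VV J) \<times> {0..<d}) \<le> card (cosets (insert j J) M)"
    using card_mono[OF fin img] card_image[OF inj] by simp
  then show ?thesis by (simp add: idx_def d_def card_cartesian_product)
qed

lemma idx_pos: "0 < idx J (M \<inter> VV J)"
proof -
  have "(+) 0 ` (M \<inter> VV J) \<in> cosets J (M \<inter> VV J)" by (rule coset_in) simp
  then show ?thesis using fin' by (auto simp: idx_def card_gt_0_iff)
qed

end

lemma Phi_inj:
  assumes jJ: "j \<notin> J" and M1: "M1 \<in> Gs (insert j J)" and M2: "M2 \<in> Gs (insert j J)"
    and e1: "M1 \<inter> VV J = M2 \<inter> VV J" and e2: "dco j M1 = dco j M2" and e3: "Cm j J M1 = Cm j J M2"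
  shows "M1 = M2"
proof -
  interpret A: stepctx j J M1 using jJ M1 by unfold_locales
  interpret B: stepctx j J M2 using jJ M2 by unfold_locales
  have sub: "Ma \<subseteq> Mb" if a: "stepctx j J Ma" and b: "stepctx j J Mb"
    and f1: "Ma \<inter> VV J = Mb \<inter> VV J" and f2: "dco j Ma = dco j Mb" and f3: "Cm j J Ma = Cm j J Mb" for Ma Mb
  proof
    interpret A: stepctx j J Ma by fact
    interpret B: stepctx j J Mb by fact
    fix v assume v: "v \<in> Ma"
    obtain q where q: "v$j = int (dco j Ma) * q" using A.ddvd[OF v] by (auto simp: dvd_def)
    obtain x where x: "x \<in> VV J" "Cm j J Ma = (+) x ` (Ma \<inter> VV J)" using A.Cm_coset by (auto simp: cosets_def)
    have "x + 0 \<in> (+) x ` (Ma \<inter> VV J)" using subgroup_zero[OF A.sg'] by blast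
    then obtain w where w: "w \<in> Cm j J Ma" using x by auto
    have wa: "int (dco j Ma) *s ev j + w \<in> Ma" "w \<in> VV J" using w by (auto simp: Cm_def)
    have wb: "int (dco j Ma) *s ev j + w \<in> Mb" using w f3 f2 by (auto simp: Cm_def)
    define u where "u = v - q *s (int (dco j Ma) *s ev j + w)"
    have uMa: "u \<in> Ma" unfolding u_def by (rule subgroup_diff[OF A.sg v subgroup_smult[OF A.sg wa(1)]])
    have "w$j = 0" using wa(2) jJ by (auto simp: VV_def)
    then have "u$j = 0" using q by (simp add: u_def)
    then have "u \<in> VV J" using uMa A.MV by (intro A.VV_j0) auto
    then have "u \<in> Mb" using uMa f1 by blast
    moreover have "v = u + q *s (int (dco j Ma) *s ev j + w)" by (simp add: u_def)
    ultimately show "v \<in> Mb" using subgroup_add[OF B.sg] subgroup_smult[OF B.sg wb] by metis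
  qed
  show ?thesis
    using sub[OF A.stepctx_axioms B.stepctx_axioms e1 e2 e3] sub[OF B.stepctx_axioms A.stepctx_axioms e1[symmetric] e2[symmetric] e3[symmetric]]
    by blast
qed

lemma step_sum:
  fixes f :: "(int^'n::finite) set \<Rightarrow> real" and g :: "(int^'n) set \<Rightarrow> nat \<Rightarrow> real"
  assumes jJ: "j \<notin> J" and S: "finite S" "S \<subseteq> Gs (insert j J)"
    and fg: "\<forall>M\<in>S. f M \<le> g (M \<inter> VV J) (dco j M)" and g0: "\<forall>X d. 0 \<le> g X d"
  shows "(\<Sum>M\<in>S. f M) \<le> (\<Sum>X\<in>(\<lambda>M. M \<inter> VV J) ` S. \<Sum>d\<in>dco j ` S. real (idx J X) * g X d)"
proof -
  define Phi where "Phi M = (M \<inter> VV J, dco j M, Cm j J M)" for M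
  have inj: "inj_on Phi S"
    using Phi_inj[OF jJ] S(2) by (auto simp: inj_on_def Phi_def)
  define S1 where "S1 = (\<lambda>M. M \<inter> VV J) ` S"
  define S2 where "S2 = dco j ` S"
  define Sig where "Sig = Sigma S1 (\<lambda>X. S2 \<times> cosets J X)"
  have finS1: "finite S1" "finite S2" using S by (auto simp: S1_def S2_def)
  have finc: "X \<in> S1 \<Longrightarrow> finite (cosets J X)" for X
    using S jJ by (auto simp: S1_def intro: stepctx.fin' stepctx.intro)
  have finSig: "finite Sig" using finS1 finc by (auto simp: Sig_def intro!: finite_SigmaI)
  have sub: "Phi ` S \<subseteq> Sig"
    using S jJ by (auto simp: Phi_def Sig_def S1_def S2_def intro: stepctx.Cm_coset stepctx.intro)
  have "(\<Sum>M\<in>S. f M) \<le> (\<Sum>M\<in>S. g (M \<inter> VV J) (dco j M))" using fg by (intro sum_mono) auto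
  also have "\<dots> = (\<Sum>t\<in>Phi ` S. g (fst t) (fst (snd t)))"
    by (subst sum.reindex[OF inj]) (simp add: Phi_def)
  also have "\<dots> \<le> (\<Sum>t\<in>Sig. g (fst t) (fst (snd t)))"
    by (rule sum_mono2[OF finSig sub]) (simp add: g0)
  also have "\<dots> = (\<Sum>X\<in>S1. \<Sum>p\<in>S2 \<times> cosets J X. g X (fst p))"
    unfolding Sig_def using sum.Sigma[of S1 "\<lambda>X. S2 \<times> cosets J X" "\<lambda>X p. g X (fst p)"] finS1 finc
    by (simp add: split_def)
  also have "\<dots> = (\<Sum>X\<in>S1. \<Sum>d\<in>S2. real (idx J X) * g X d)"
  proof (rule sum.cong[OF refl])
    fix X assume X: "X \<in> S1"
    have "(\<Sum>p\<in>S2 \<times> cosets J X. g X (fst p)) = (\<Sum>d\<in>S2. \<Sum>C\<in>cosets J X. g X d)"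
      using sum.cartesian_product[of "\<lambda>d C. g X d" "cosets J X" S2] by (simp add: split_def)
    also have "\<dots> = (\<Sum>d\<in>S2. real (idx J X) * g X d)" by (simp add: idx_def)
    finally show "(\<Sum>p\<in>S2 \<times> cosets J X. g X (fst p)) = (\<Sum>d\<in>S2. real (idx J X) * g X d)" .
  qed
  finally show ?thesis by (simp add: S1_def S2_def)
qed

definition Zs :: "real \<Rightarrow> real" where "Zs p = suminf (\<lambda>d. real d powr (-p))"

lemma Zs_bound: assumes "p > 1" "finite A" shows "(\<Sum>d\<in>A. real d powr (-p)) \<le> Zs p"
proof -
  have "summable (\<lambda>d. real d powr (-p))" using assms(1) by (subst summable_real_powr_iff) simp
  then show ?thesis unfolding Zs_def by (rule sum_le_suminf[OF _ assms(2)]) simp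
qed

lemma Zs_nonneg: "p > 1 \<Longrightarrow> 0 \<le> Zs p"
  using Zs_bound[of p "{}"] by simp

lemma idx_powr_step:
  assumes "0 < x" "0 < y" "x \<le> z" "a \<le> 0"
  shows "real z powr a \<le> real x powr a" 
  using powr_mono2'[of a "real x" "real z"] assms by simp

lemma mult_powr_shift: "0 < (x::real) \<Longrightarrow> x * (x * y) powr (-s) = x powr (1 - s) * y powr (-s)"
proof -
  assume x: "0 < x"
  have "x * (x * y) powr (-s) = x * (x powr (-s) * y powr (-s))"
    using x by (cases "y \<ge> 0") (auto simp: powr_mult)
  also have "\<dots> = (x * x powr (-s)) * y powr (-s)" by simp
  also have "x * x powr (-s) = x powr (1 - s)" using powr_mult_base[of x "-s"] x by simp
  finally show ?thesis .
qed

definition GQ :: "'n set \<Rightarrow> ((int^'n) set \<Rightarrow> bool) \<Rightarrow> (int^'n) set set" where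
  "GQ J Q = Gs J \<inter> {M. Q M}"

definition bounded_at :: "'n set \<Rightarrow> ((int^'n) set \<Rightarrow> bool) \<Rightarrow> real \<Rightarrow> bool" where
  "bounded_at J Q s \<longleftrightarrow> (\<exists>K. \<forall>S. finite S \<and> S \<subseteq> GQ J Q \<longrightarrow> (\<Sum>M\<in>S. real (idx J M) powr (-s)) \<le> K)"

lemma gen_step:
  fixes J :: "'n::finite set"
  assumes jJ: "j \<notin> J" and Qloc: "\<And>M. Q (M \<inter> VV J) = Q M" and s1: "s > 1"
    and bd: "bounded_at J Q (s - 1)"
  shows "bounded_at (insert j J) Q s"
proof -
  obtain K where K: "\<And>S. finite S \<Longrightarrow> S \<subseteq> GQ J Q \<Longrightarrow> (\<Sum>M\<in>S. real (idx J M) powr (-(s-1))) \<le> K"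
    using bd by (auto simp: bounded_at_def)
  have "(\<Sum>M\<in>S. real (idx (insert j J) M) powr (-s)) \<le> K * Zs s" if S: "finite S" "S \<subseteq> GQ (insert j J) Q" for S
  proof -
    have SG: "S \<subseteq> Gs (insert j J)" using S by (auto simp: GQ_def)
    have ctx: "M \<in> S \<Longrightarrow> stepctx j J M" for M using SG jJ by (auto intro: stepctx.intro)
    define g where "g X d = (real (idx J X) * real d) powr (-s)" for X and d :: nat
    have fg: "\<forall>M\<in>S. real (idx (insert j J) M) powr (-s) \<le> g (M \<inter> VV J) (dco j M)"
    proof
      fix M assume M: "M \<in> S"
      have pos: "0 < real (idx J (M \<inter> VV J) * dco j M)" using stepctx.idx_pos[OF ctx[OF M]] stepctx.d0[OF ctx[OF M]] by simp
      have le: "real (idx J (M \<inter> VV J) * dco j M) \<le> real (idx (insert j J) M)"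
        using stepctx.idx_ge[OF ctx[OF M]] by (simp only: of_nat_le_iff)
      have "real (idx (insert j J) M) powr (-s) \<le> real (idx J (M \<inter> VV J) * dco j M) powr (-s)"
        using powr_mono2'[OF _ pos le, of "-s"] s1 by simp
      then show "real (idx (insert j J) M) powr (-s) \<le> g (M \<inter> VV J) (dco j M)"
        unfolding g_def by simp
    qed
    have "(\<Sum>M\<in>S. real (idx (insert j J) M) powr (-s))
        \<le> (\<Sum>X\<in>(\<lambda>M. M \<inter> VV J) ` S. \<Sum>d\<in>dco j ` S. real (idx J X) * g X d)"
      by (rule step_sum[OF jJ S(1) SG fg]) (simp add: g_def)
    also have "\<dots> = (\<Sum>X\<in>(\<lambda>M. M \<inter> VV J) ` S. real (idx J X) powr (-(s-1)) * (\<Sum>d\<in>dco j ` S. real d powr (-s)))"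
    proof (rule sum.cong[OF refl])
      fix X assume X: "X \<in> (\<lambda>M. M \<inter> VV J) ` S"
      then have "0 < idx J X" using stepctx.idx_pos ctx by auto
      then show "(\<Sum>d\<in>dco j ` S. real (idx J X) * g X d) = real (idx J X) powr (-(s-1)) * (\<Sum>d\<in>dco j ` S. real d powr (-s))"
        by (simp add: g_def mult_powr_shift sum_distrib_left)
    qed
    also have "\<dots> \<le> (\<Sum>X\<in>(\<lambda>M. M \<inter> VV J) ` S. real (idx J X) powr (-(s-1)) * Zs s)"
      by (intro sum_mono mult_left_mono Zs_bound) (use S s1 in auto)
    also have "\<dots> = (\<Sum>X\<in>(\<lambda>M. M \<inter> VV J) ` S. real (idx J X) powr (-(s-1))) * Zs s"
      by (simp add: sum_distrib_right)
    also have "\<dots> \<le> K * Zs s"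
    proof (rule mult_right_mono[OF K Zs_nonneg[OF s1]])
      show "finite ((\<lambda>M. M \<inter> VV J) ` S)" using S by simp
      show "(\<lambda>M. M \<inter> VV J) ` S \<subseteq> GQ J Q"
        using S stepctx.MG'[OF ctx] Qloc by (auto simp: GQ_def)
    qed
    finally show ?thesis .
  qed
  then show ?thesis by (auto simp: bounded_at_def)
qed

lemma gen_ind:
  fixes J0 :: "'n::finite set"
  assumes R: "finite R" "R \<inter> J0 = {}"
    and base: "\<And>s. s0 < s \<Longrightarrow> s \<le> s0 + 1/2 \<Longrightarrow> bounded_at J0 Q s"
    and Qloc: "\<And>M J. J0 \<subseteq> J \<Longrightarrow> Q (M \<inter> VV J) = Q M" and s0: "1 \<le> s0"
  shows "s0 + card R < s \<Longrightarrow> s \<le> s0 + card R + 1/2 \<Longrightarrow> bounded_at (J0 \<union> R) Q s"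
  using R
proof (induction R arbitrary: s rule: finite_induct)
  case empty
  then show ?case using base by simp
next
  case (insert j R)
  have jJ: "j \<notin> J0 \<union> R" using insert by auto
  have "bounded_at (J0 \<union> R) Q (s - 1)" using insert by auto
  moreover have ql: "\<And>M. Q (M \<inter> VV (J0 \<union> R)) = Q M" using Qloc by auto
  ultimately have "bounded_at (insert j (J0 \<union> R)) Q s"
    using gen_step[of j "J0 \<union> R" Q s, OF jJ ql] insert s0 by auto
  then show ?case by simp
qed

lemma idx_empty: assumes "Z \<in> Gs {}" shows "idx {} Z = 1"
proof -
  have "cosets {} Z = {Z}" unfolding cosets_def VV_empty by auto
  then show ?thesis by (simp add: idx_def)
qed

lemma powr_le_neg:
  assumes "a \<le> 0" "0 < real x" "x \<le> z"
  shows "real z powr a \<le> real x powr a"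
  using powr_mono2'[of a "real x" "real z"] assms by simp

lemma base3:
  fixes a b c :: "'n::finite" and P :: "nat \<Rightarrow> nat \<Rightarrow> nat \<Rightarrow> bool"
  assumes ab: "a \<noteq> b" and ac: "a \<noteq> c" and bc: "b \<noteq> c"
    and Qdef: "\<And>M. Q M = P (dco a (M \<inter> VV {a})) (dco b (M \<inter> VV (insert b {a}))) (dco c (M \<inter> VV (insert c (insert b {a}))))"
    and s2: "2 \<le> s" and S: "finite S" "S \<subseteq> GQ (insert c (insert b {a})) Q"
  shows "\<exists>A1 A2 A3. finite A1 \<and> finite A2 \<and> finite A3 \<and> 0 \<notin> A1 \<and> 0 \<notin> A2 \<and> 0 \<notin> A3 \<and>
     (\<Sum>M\<in>S. real (idx (insert c (insert b {a})) M) powr (-s)) \<le>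
     (\<Sum>d1\<in>A1. \<Sum>d2\<in>A2. \<Sum>d3\<in>A3. if P d1 d2 d3 then real d1 powr (2-s) * real d2 powr (1-s) * real d3 powr (-s) else 0)"
proof -
  define Jab where "Jab = insert b {a}"
  define J3 where "J3 = insert c Jab"
  have cJ: "c \<notin> Jab" using ac bc by (auto simp: Jab_def)
  have bJ: "b \<notin> {a}" using ab by auto
  have SG: "S \<subseteq> Gs (insert c Jab)" using S by (auto simp: GQ_def Jab_def)
  have ctx3: "M \<in> S \<Longrightarrow> stepctx c Jab M" for M using SG cJ by (auto intro: stepctx.intro)
  define A3 where "A3 = dco c ` S"
  define S1 where "S1 = (\<lambda>M. M \<inter> VV Jab) ` S"
  define g3 where "g3 X d = (if P (dco a (X \<inter> VV {a})) (dco b X) d then (real (idx Jab X) * real d) powr (-s) else 0)" for X d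
  have fg3: "\<forall>M\<in>S. real (idx (insert c Jab) M) powr (-s) \<le> g3 (M \<inter> VV Jab) (dco c M)"
  proof
    fix M assume M: "M \<in> S"
    have QM: "Q M" using M S by (auto simp: GQ_def)
    have MV: "M \<subseteq> VV (insert c Jab)" using stepctx.MV[OF ctx3[OF M]] .
    have e1: "M \<inter> VV Jab \<inter> VV {a} = M \<inter> VV {a}" using VV_mono[of "{a}" Jab] by (auto simp: Jab_def)
    have e2: "M \<inter> VV (insert c (insert b {a})) = M" using MV by (auto simp: Jab_def)
    have P: "P (dco a (M \<inter> VV Jab \<inter> VV {a})) (dco b (M \<inter> VV Jab)) (dco c M)"
      using QM Qdef[of M] e1 e2 by (simp add: Jab_def)
    have pos: "0 < real (idx Jab (M \<inter> VV Jab) * dco c M)" using stepctx.idx_pos[OF ctx3[OF M]] stepctx.d0[OF ctx3[OF M]] by simp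
    have le: "idx Jab (M \<inter> VV Jab) * dco c M \<le> idx (insert c Jab) M" using stepctx.idx_ge[OF ctx3[OF M]] .
    show "real (idx (insert c Jab) M) powr (-s) \<le> g3 (M \<inter> VV Jab) (dco c M)"
      using P powr_le_neg[OF _ pos le, of "-s"] s2 by (simp add: g3_def)
  qed
  have L3: "(\<Sum>M\<in>S. real (idx (insert c Jab) M) powr (-s)) \<le> (\<Sum>X\<in>S1. \<Sum>d\<in>A3. real (idx Jab X) * g3 X d)"
    unfolding S1_def A3_def by (rule step_sum[OF cJ S(1) SG fg3]) (simp add: g3_def)
  have S1G: "S1 \<subseteq> Gs (insert b {a})" using stepctx.MG'[OF ctx3] by (auto simp: S1_def Jab_def)
  have finS1: "finite S1" using S by (simp add: S1_def)
  have ctx2: "X \<in> S1 \<Longrightarrow> stepctx b {a} X" for X using S1G bJ by (auto intro: stepctx.intro)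
  define F2 where "F2 X = (\<Sum>d\<in>A3. real (idx Jab X) * g3 X d)" for X
  define A2 where "A2 = dco b ` S1"
  define T1 where "T1 = (\<lambda>X. X \<inter> VV {a}) ` S1"
  define g2 where "g2 Y d2 = (\<Sum>d3\<in>A3. if P (dco a Y) d2 d3 then (real (idx {a} Y) * real d2) powr (1-s) * real d3 powr (-s) else 0)" for Y d2
  have fg2: "\<forall>X\<in>S1. F2 X \<le> g2 (X \<inter> VV {a}) (dco b X)"
  proof
    fix X assume X: "X \<in> S1"
    have pos: "0 < real (idx {a} (X \<inter> VV {a}) * dco b X)" using stepctx.idx_pos[OF ctx2[OF X]] stepctx.d0[OF ctx2[OF X]] by simp
    have le: "idx {a} (X \<inter> VV {a}) * dco b X \<le> idx Jab X" using stepctx.idx_ge[OF ctx2[OF X]] by (simp add: Jab_def)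
    have ipos: "0 < real (idx Jab X)" using pos le by linarith
    have mono: "real (idx Jab X) powr (1-s) \<le> real (idx {a} (X \<inter> VV {a}) * dco b X) powr (1-s)"
      using powr_le_neg[OF _ pos le, of "1-s"] s2 by simp
    have "F2 X = (\<Sum>d3\<in>A3. if P (dco a (X \<inter> VV {a})) (dco b X) d3 then real (idx Jab X) powr (1-s) * real d3 powr (-s) else 0)"
      unfolding F2_def g3_def using ipos by (intro sum.cong refl) (simp add: mult_powr_shift)
    also have "\<dots> \<le> g2 (X \<inter> VV {a}) (dco b X)"
      unfolding g2_def using mono by (intro sum_mono) (auto intro!: mult_right_mono simp: Int_assoc)
    finally show "F2 X \<le> g2 (X \<inter> VV {a}) (dco b X)" .
  qed
  have L2: "(\<Sum>X\<in>S1. F2 X) \<le> (\<Sum>Y\<in>T1. \<Sum>d\<in>A2. real (idx {a} Y) * g2 Y d)"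
    unfolding T1_def A2_def by (rule step_sum[OF bJ finS1 S1G fg2]) (simp add: g2_def sum_nonneg)
  have T1G: "T1 \<subseteq> Gs (insert a {})" using stepctx.MG'[OF ctx2] by (auto simp: T1_def)
  have finT1: "finite T1" using finS1 by (simp add: T1_def)
  have ctx1: "Y \<in> T1 \<Longrightarrow> stepctx a {} Y" for Y using T1G by (auto intro: stepctx.intro)
  define F1 where "F1 Y = (\<Sum>d\<in>A2. real (idx {a} Y) * g2 Y d)" for Y
  define A1 where "A1 = dco a ` T1"
  define U1 where "U1 = (\<lambda>Y. Y \<inter> VV {}) ` T1"
  define g1 where "g1 Z d1 = (\<Sum>d2\<in>A2. \<Sum>d3\<in>A3. if P d1 d2 d3 then (real (idx {} Z) * real d1) powr (2-s) * real d2 powr (1-s) * real d3 powr (-s) else 0)" for Z :: "(int^'n) set" and d1 :: nat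
  have fg1: "\<forall>Y\<in>T1. F1 Y \<le> g1 (Y \<inter> VV {}) (dco a Y)"
  proof
    fix Y assume Y: "Y \<in> T1"
    have pos: "0 < real (idx {} (Y \<inter> VV {}) * dco a Y)" using stepctx.idx_pos[OF ctx1[OF Y]] stepctx.d0[OF ctx1[OF Y]] by simp
    have le: "idx {} (Y \<inter> VV {}) * dco a Y \<le> idx {a} Y" using stepctx.idx_ge[OF ctx1[OF Y]] by simp
    have ipos: "0 < real (idx {a} Y)" using pos le by linarith
    have mono: "real (idx {a} Y) powr (2-s) \<le> real (idx {} (Y \<inter> VV {}) * dco a Y) powr (2-s)"
      using powr_le_neg[OF _ pos le, of "2-s"] s2 by simp
    have e: "real (idx {a} Y) * (real (idx {a} Y) * real d2) powr (1-s) = real (idx {a} Y) powr (2-s) * real d2 powr (1-s)" for d2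
      using mult_powr_shift[OF ipos, of "real d2" "s-1"] by simp
    have "F1 Y = (\<Sum>d2\<in>A2. \<Sum>d3\<in>A3. if P (dco a Y) d2 d3 then real (idx {a} Y) powr (2-s) * real d2 powr (1-s) * real d3 powr (-s) else 0)"
      unfolding F1_def g2_def sum_distrib_left by (intro sum.cong refl) (simp add: e mult.assoc)
    also have "\<dots> \<le> g1 (Y \<inter> VV {}) (dco a Y)"
      unfolding g1_def using mono by (intro sum_mono) (auto intro!: mult_right_mono)
    finally show "F1 Y \<le> g1 (Y \<inter> VV {}) (dco a Y)" .
  qed
  have L1: "(\<Sum>Y\<in>T1. F1 Y) \<le> (\<Sum>Z\<in>U1. \<Sum>d\<in>A1. real (idx {} Z) * g1 Z d)"
    unfolding U1_def A1_def by (rule step_sum[of a "{}", OF _ finT1 T1G fg1]) (auto simp: g1_def intro!: sum_nonneg)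
  define Tot where "Tot = (\<Sum>d1\<in>A1. \<Sum>d2\<in>A2. \<Sum>d3\<in>A3. if P d1 d2 d3 then real d1 powr (2-s) * real d2 powr (1-s) * real d3 powr (-s) else 0)"
  have U1G: "U1 \<subseteq> Gs {}" using stepctx.MG'[OF ctx1] by (auto simp: U1_def)
  have U10: "U1 \<subseteq> {{0}}"
  proof
    fix Z assume "Z \<in> U1"
    then obtain Y where Y: "Y \<in> T1" "Z = Y \<inter> VV {}" by (auto simp: U1_def)
    have "0 \<in> Y" using subgroup_zero stepctx.sg[OF ctx1[OF Y(1)]] by blast
    then show "Z \<in> {{0}}" using Y by (auto simp: VV_empty)
  qed
  have Tot0: "0 \<le> Tot" unfolding Tot_def by (intro sum_nonneg) auto
  have "(\<Sum>Z\<in>U1. \<Sum>d\<in>A1. real (idx {} Z) * g1 Z d) = (\<Sum>Z\<in>U1. Tot)"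
  proof (rule sum.cong[OF refl])
    fix Z assume "Z \<in> U1"
    then have "real (idx {} Z) = 1" using idx_empty U1G by auto
    then show "(\<Sum>d\<in>A1. real (idx {} Z) * g1 Z d) = Tot" by (simp only: g1_def Tot_def mult_1)
  qed
  also have "\<dots> \<le> (\<Sum>Z\<in>{{0::int^'n}}. Tot)" using U10 Tot0 by (intro sum_mono2) auto
  also have "\<dots> = Tot" by simp
  finally have L0: "(\<Sum>Z\<in>U1. \<Sum>d\<in>A1. real (idx {} Z) * g1 Z d) \<le> Tot" .
  have "(\<Sum>M\<in>S. real (idx J3 M) powr (-s)) \<le> (\<Sum>X\<in>S1. F2 X)" using L3 by (simp add: F2_def J3_def)
  also have "\<dots> \<le> (\<Sum>Y\<in>T1. F1 Y)" using L2 by (simp add: F1_def)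
  also have "\<dots> \<le> Tot" using L1 L0 by linarith
  finally have main: "(\<Sum>M\<in>S. real (idx J3 M) powr (-s)) \<le> Tot" .
  have fins: "finite A1" "finite A2" "finite A3" using finT1 finS1 S by (auto simp: A1_def A2_def A3_def)
  have pos: "0 \<notin> A1" "0 \<notin> A2" "0 \<notin> A3"
    using stepctx.d0[OF ctx1] stepctx.d0[OF ctx2] stepctx.d0[OF ctx3]
    by (auto simp: A1_def A2_def A3_def) (metis less_irrefl)+
  show ?thesis using main fins pos unfolding Tot_def J3_def Jab_def by blast
qed

lemma triple_bound:
  assumes fin: "finite A1" "finite A2" "finite A3" "0 \<notin> A1" "0 \<notin> A2" "0 \<notin> A3"
    and pt: "\<And>d1 d2 d3. 0 < d1 \<Longrightarrow> 0 < d2 \<Longrightarrow> 0 < d3 \<Longrightarrow> (if P d1 d2 d3 then real d1 powr (2-s) * real d2 powr (1-s) * real d3 powr (-s) else 0)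
        \<le> C * (real d1 powr (-p) * real d2 powr (-p) * real d3 powr (-p))"
    and C: "0 \<le> C" and p: "1 < p"
  shows "(\<Sum>d1\<in>A1. \<Sum>d2\<in>A2. \<Sum>d3\<in>A3. if P d1 d2 d3 then real d1 powr (2-s) * real d2 powr (1-s) * real d3 powr (-s) else 0)
     \<le> C * (Zs p * Zs p * Zs p)"
proof -
  have "(\<Sum>d1\<in>A1. \<Sum>d2\<in>A2. \<Sum>d3\<in>A3. if P d1 d2 d3 then real d1 powr (2-s) * real d2 powr (1-s) * real d3 powr (-s) else 0)
     \<le> (\<Sum>d1\<in>A1. \<Sum>d2\<in>A2. \<Sum>d3\<in>A3. C * (real d1 powr (-p) * real d2 powr (-p) * real d3 powr (-p)))"
    using fin by (intro sum_mono pt) (auto intro!: gr0I)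
  also have "\<dots> \<le> (\<Sum>d1\<in>A1. \<Sum>d2\<in>A2. (C * (real d1 powr (-p) * real d2 powr (-p))) * Zs p)"
  proof (intro sum_mono)
    fix d1 d2
    have "(\<Sum>d3\<in>A3. C * (real d1 powr (-p) * real d2 powr (-p) * real d3 powr (-p)))
        = (C * (real d1 powr (-p) * real d2 powr (-p))) * (\<Sum>d3\<in>A3. real d3 powr (-p))"
      by (simp add: sum_distrib_left mult.assoc)
    also have "\<dots> \<le> (C * (real d1 powr (-p) * real d2 powr (-p))) * Zs p"
      using Zs_bound[OF p fin(3)] C by (intro mult_left_mono) auto
    finally show "(\<Sum>d3\<in>A3. C * (real d1 powr (-p) * real d2 powr (-p) * real d3 powr (-p))) \<le> (C * (real d1 powr (-p) * real d2 powr (-p))) * Zs p" .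
  qed
  also have "\<dots> \<le> (\<Sum>d1\<in>A1. (C * real d1 powr (-p) * Zs p) * Zs p)"
  proof (intro sum_mono)
    fix d1
    have "(\<Sum>d2\<in>A2. (C * (real d1 powr (-p) * real d2 powr (-p))) * Zs p)
        = (C * real d1 powr (-p) * Zs p) * (\<Sum>d2\<in>A2. real d2 powr (-p))"
      by (simp add: sum_distrib_left mult_ac)
    also have "\<dots> \<le> (C * real d1 powr (-p) * Zs p) * Zs p"
      using Zs_bound[OF p fin(2)] C Zs_nonneg[OF p] by (intro mult_left_mono) auto
    finally show "(\<Sum>d2\<in>A2. (C * (real d1 powr (-p) * real d2 powr (-p))) * Zs p) \<le> (C * real d1 powr (-p) * Zs p) * Zs p" .
  qed
  also have "\<dots> = (C * Zs p * Zs p) * (\<Sum>d1\<in>A1. real d1 powr (-p))"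
    by (simp add: sum_distrib_left mult_ac)
  also have "\<dots> \<le> (C * Zs p * Zs p) * Zs p"
    using Zs_bound[OF p fin(1)] C Zs_nonneg[OF p] by (intro mult_left_mono) auto
  also have "\<dots> = C * (Zs p * Zs p * Zs p)" by (simp add: mult_ac)
  finally show ?thesis .
qed

lemma pt_sub:
  fixes \<tau> :: int
  assumes t: "\<tau> \<noteq> 0" and d: "0 < d1" "0 < d2" "0 < d3" and dv: "int d1 dvd \<tau> * int d2 * int d3" and s: "5/2 < s"
  shows "real d1 powr (2-s) * real d2 powr (1-s) * real d3 powr (-s)
     \<le> \<bar>real_of_int \<tau>\<bar> powr (1/2) * (real d1 powr (-(s-3/2)) * real d2 powr (-(s-3/2)) * real d3 powr (-(s-3/2)))"
proof -
  let ?t = "\<bar>real_of_int \<tau>\<bar>"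
  have "\<bar>int d1\<bar> \<le> \<bar>\<tau> * int d2 * int d3\<bar>" using dvd_imp_le_int[OF _ dv] t d by simp
  then have "int d1 \<le> \<bar>\<tau>\<bar> * int d2 * int d3" by (simp add: abs_mult)
  then have le: "real d1 \<le> ?t * real d2 * real d3"
    by (metis (mono_tags, opaque_lifting) of_int_abs of_int_le_iff of_int_mult of_int_of_nat_eq)
  have r: "0 < real d1" "0 < real d2" "1 \<le> real d3" using d by auto
  have e1: "real d1 powr (2-s) = real d1 powr (-(s-3/2)) * real d1 powr (1/2)"
    by (simp add: powr_add[symmetric])
  have m1: "real d1 powr (1/2) \<le> (?t * real d2 * real d3) powr (1/2)"
    using le r by (intro powr_mono2) auto
  have e2: "(?t * real d2 * real d3) powr (1/2) = ?t powr (1/2) * real d2 powr (1/2) * real d3 powr (1/2)"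
    by (simp add: powr_mult)
  have e3: "real d2 powr (1-s) * real d2 powr (1/2) = real d2 powr (-(s-3/2))"
    by (simp add: powr_add[symmetric])
  have e4: "real d3 powr (-s) * real d3 powr (1/2) = real d3 powr (1/2 - s)"
    by (simp add: powr_add[symmetric])
  have m4: "real d3 powr (1/2 - s) \<le> real d3 powr (-(s-3/2))"
    using r by (intro powr_mono) auto
  have "real d1 powr (2-s) * real d2 powr (1-s) * real d3 powr (-s)
      = real d1 powr (-(s-3/2)) * real d1 powr (1/2) * (real d2 powr (1-s) * real d3 powr (-s))"
    by (simp add: e1 mult.assoc)
  also have "\<dots> \<le> real d1 powr (-(s-3/2)) * (?t powr (1/2) * real d2 powr (1/2) * real d3 powr (1/2)) * (real d2 powr (1-s) * real d3 powr (-s))"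
    using m1 e2 by (intro mult_right_mono mult_left_mono) auto
  also have "\<dots> = ?t powr (1/2) * (real d1 powr (-(s-3/2)) * (real d2 powr (1-s) * real d2 powr (1/2)) * (real d3 powr (-s) * real d3 powr (1/2)))"
    by (simp add: mult_ac)
  also have "\<dots> = ?t powr (1/2) * (real d1 powr (-(s-3/2)) * real d2 powr (-(s-3/2)) * real d3 powr (1/2 - s))"
    by (simp only: e3 e4)
  also have "\<dots> \<le> ?t powr (1/2) * (real d1 powr (-(s-3/2)) * real d2 powr (-(s-3/2)) * real d3 powr (-(s-3/2)))"
    using m4 by (intro mult_left_mono) auto
  finally show ?thesis .
qed

lemma pt_id:
  fixes \<tau> :: int
  assumes t: "\<tau> \<noteq> 0" and d: "0 < d1" "0 < d2" "0 < d3" and dv: "int d1 dvd \<tau> * int d3" and s: "2 < s" "s \<le> 5/2"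
  shows "real d1 powr (2-s) * real d2 powr (1-s) * real d3 powr (-s)
     \<le> \<bar>real_of_int \<tau>\<bar> powr (2 - s/2) * (real d1 powr (-(s/2)) * real d2 powr (-(s/2)) * real d3 powr (-(s/2)))"
proof -
  let ?t = "\<bar>real_of_int \<tau>\<bar>"
  have "\<bar>int d1\<bar> \<le> \<bar>\<tau> * int d3\<bar>" using dvd_imp_le_int[OF _ dv] t d by simp
  then have "int d1 \<le> \<bar>\<tau>\<bar> * int d3" by (simp add: abs_mult)
  then have le: "real d1 \<le> ?t * real d3"
    by (metis (mono_tags, opaque_lifting) of_int_abs of_int_le_iff of_int_mult of_int_of_nat_eq)
  have r: "0 < real d1" "1 \<le> real d2" "1 \<le> real d3" using d by auto
  have e1: "real d1 powr (2-s) = real d1 powr (-(s/2)) * real d1 powr (2 - s/2)"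
    by (simp add: powr_add[symmetric])
  have m1: "real d1 powr (2 - s/2) \<le> (?t * real d3) powr (2 - s/2)"
    using le r s by (intro powr_mono2) auto
  have e2: "(?t * real d3) powr (2 - s/2) = ?t powr (2 - s/2) * real d3 powr (2 - s/2)"
    by (simp add: powr_mult)
  have m2: "real d2 powr (1-s) \<le> real d2 powr (-(s/2))"
    using r s by (intro powr_mono) auto
  have e4: "real d3 powr (-s) * real d3 powr (2 - s/2) = real d3 powr (2 - 3 * s / 2)"
    by (simp add: powr_add[symmetric])
  have m4: "real d3 powr (2 - 3 * s / 2) \<le> real d3 powr (-(s/2))"
    using r s by (intro powr_mono) auto
  have "real d1 powr (2-s) * real d2 powr (1-s) * real d3 powr (-s)
      = real d1 powr (-(s/2)) * real d1 powr (2 - s/2) * (real d2 powr (1-s) * real d3 powr (-s))"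
    by (simp add: e1 mult.assoc)
  also have "\<dots> \<le> real d1 powr (-(s/2)) * (?t powr (2 - s/2) * real d3 powr (2 - s/2)) * (real d2 powr (1-s) * real d3 powr (-s))"
    using m1 e2 by (intro mult_right_mono mult_left_mono) auto
  also have "\<dots> = ?t powr (2 - s/2) * (real d1 powr (-(s/2)) * real d2 powr (1-s) * (real d3 powr (-s) * real d3 powr (2 - s/2)))"
    by (simp add: mult_ac)
  also have "\<dots> = ?t powr (2 - s/2) * (real d1 powr (-(s/2)) * real d2 powr (1-s) * real d3 powr (2 - 3 * s / 2))"
    by (simp only: e4)
  also have "\<dots> \<le> ?t powr (2 - s/2) * (real d1 powr (-(s/2)) * real d2 powr (-(s/2)) * real d3 powr (-(s/2)))"
    using m2 m4 by (intro mult_left_mono mult_mono) auto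
  finally show ?thesis .
qed

lemma add_span_sub: "S \<subseteq> add_span S" by (auto simp: add_span_def)
lemma add_span_least: "add_subgroup M \<Longrightarrow> S \<subseteq> M \<Longrightarrow> add_span S \<subseteq> M" by (auto simp: add_span_def)
lemma add_span_zero: "0 \<in> add_span S" by (auto simp: add_span_def add_subgroup_def)

lemma zero_subgroup: "add_subgroup {0::'a::ab_group_add}" by (simp add: add_subgroup_def)

lemma altn_anti: assumes "bilin B" "altn B" shows "B q p = - B p q"
proof -
  have "0 = B (p+q) (p+q)" using assms(2) by (simp add: altn_def)
  also have "\<dots> = B p p + B p q + (B q p + B q q)" using assms(1) by (simp add: bilin_def)
  finally have "B p q + B q p = 0" using assms(2) by (simp add: altn_def)
  then show ?thesis by (simp add: eq_neg_iff_add_eq_0 add.commute)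
qed

lemma nilp_bracket:
  fixes B :: "int^'n::finite \<Rightarrow> int^'n \<Rightarrow> int^'n"
  assumes L: "lie_ring B" and na: "\<not> abelian_lie B" and nc: "nilpotent_class B c"
  shows "\<exists>x y. B x y \<noteq> 0 \<and> (\<forall>u. B u (B x y) = 0) \<and> (\<forall>u. B (B x y) u = 0)"
proof -
  have lc: "lcs B c = {0}" "lcs B (c-1) \<noteq> {0}" using nc by (auto simp: nilpotent_class_def)
  have c0: "c \<noteq> 0"
  proof
    assume "c = 0"
    then have "(UNIV :: (int^'n) set) = {0}" using lc by simp
    moreover have "ev undefined \<noteq> (0::int^'n)" by (auto simp: vec_eq_iff)
    ultimately show False by blast
  qed
  have c1: "c \<noteq> 1"
  proof
    assume "c = 1"
    then have "add_span {B x y | x y. y \<in> (UNIV :: (int^'n) set)} = {0}" using lc by simp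
    then have "\<forall>x y. B x y = 0" using add_span_sub[of "{B x y | x y. y \<in> (UNIV :: (int^'n) set)}"] by blast
    then show False using na by (simp add: abelian_lie_def)
  qed
  obtain k where k: "c = Suc (Suc k)" using c0 c1 by (metis One_nat_def not0_implies_Suc)
  have lk: "add_span {B x y | x y. y \<in> lcs B k} \<noteq> {0}" using lc(2) k by simp
  have "\<exists>x y. y \<in> lcs B k \<and> B x y \<noteq> 0"
  proof (rule ccontr)
    assume "\<not> ?thesis"
    then have "{B x y | x y. y \<in> lcs B k} \<subseteq> {0}" by auto
    then have "add_span {B x y | x y. y \<in> lcs B k} \<subseteq> {0}" using add_span_least zero_subgroup by blast
    then show False using lk add_span_zero by blast
  qed
  then obtain x y where xy: "y \<in> lcs B k" "B x y \<noteq> 0" by blast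
  have "B x y \<in> {B x' y' | x' y'. y' \<in> lcs B k}" using xy by blast
  then have w: "B x y \<in> lcs B (Suc k)" using add_span_sub[of "{B x' y' | x' y'. y' \<in> lcs B k}"] by auto
  have c2: "B u (B x y) = 0" for u
  proof -
    have "B u (B x y) \<in> lcs B (Suc (Suc k))" using w add_span_sub by fastforce
    then show ?thesis using lc(1) k by simp
  qed
  have bl: "bilin B" using L by (simp add: bilin_lie)
  have al: "altn B" using L by (simp add: lie_ring_def altn_def)
  have c3: "B (B x y) u = 0" for u using altn_anti[OF bl al, of u "B x y"] c2[of u] by simp
  show ?thesis using xy c2 c3 by blast
qed

definition J3 :: "'n \<Rightarrow> 'n \<Rightarrow> 'n \<Rightarrow> 'n set" where "J3 a b c = insert c (insert b {a})"

definition Qs :: "int \<Rightarrow> 'n \<Rightarrow> 'n \<Rightarrow> 'n \<Rightarrow> (int^'n) set \<Rightarrow> bool" where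
  "Qs \<tau> a b c M \<longleftrightarrow> int (dco a (M \<inter> VV {a})) dvd \<tau> * int (dco b (M \<inter> VV (insert b {a}))) * int (dco c (M \<inter> VV (insert c (insert b {a}))))"
definition Qi :: "int \<Rightarrow> 'n \<Rightarrow> 'n \<Rightarrow> 'n \<Rightarrow> (int^'n) set \<Rightarrow> bool" where
  "Qi \<tau> a b c M \<longleftrightarrow> int (dco a (M \<inter> VV {a})) dvd \<tau> * int (dco c (M \<inter> VV (insert c (insert b {a}))))"

lemma Int_VV_sub: "X \<subseteq> J \<Longrightarrow> M \<inter> VV J \<inter> VV X = M \<inter> VV X"
  using VV_mono[of X J] by auto

lemma Qs_loc: "J3 a b c \<subseteq> J \<Longrightarrow> Qs \<tau> a b c (M \<inter> VV J) = Qs \<tau> a b c M"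
  by (simp add: Qs_def J3_def Int_VV_sub)
lemma Qi_loc: "J3 a b c \<subseteq> J \<Longrightarrow> Qi \<tau> a b c (M \<inter> VV J) = Qi \<tau> a b c M"
  by (simp add: Qi_def J3_def Int_VV_sub)

lemma abscissa_le:
  fixes R :: "(int^'n::finite) set \<Rightarrow> bool" and Q
  assumes RQ: "\<And>M. R M \<Longrightarrow> add_index M \<noteq> 0 \<Longrightarrow> M \<in> GQ UNIV Q"
    and bd: "\<And>s. t < s \<Longrightarrow> s \<le> t + 1/2 \<Longrightarrow> bounded_at UNIV Q s"
  shows "abscissa (\<lambda>n. card {M. R M \<and> add_index M = n}) \<le> ereal t"
proof -
  define A where "A n = {M. R M \<and> add_index M = n}" for n
  have summ1: "summable (\<lambda>n. real (card (A (Suc n))) / real (Suc n) powr s)" if ts: "t < s" "s \<le> t + 1/2" for s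
  proof -
    obtain K where K: "\<And>S. finite S \<Longrightarrow> S \<subseteq> GQ UNIV Q \<Longrightarrow> (\<Sum>M\<in>S. real (idx UNIV M) powr (-s)) \<le> K"
      using bd[OF ts] by (auto simp: bounded_at_def)
    define h where "h i = (if finite (A (Suc i)) then A (Suc i) else {})" for i
    have trm: "real (card (A (Suc i))) / real (Suc i) powr s = (\<Sum>M\<in>h i. real (idx UNIV M) powr (-s))" for i
    proof (cases "finite (A (Suc i))")
      case True
      have "(\<Sum>M\<in>h i. real (idx UNIV M) powr (-s)) = (\<Sum>M\<in>A (Suc i). real (Suc i) powr (-s))"
        using True by (intro sum.cong) (auto simp: h_def A_def idx_UNIV[symmetric])
      also have "\<dots> = real (card (A (Suc i))) / real (Suc i) powr s" by (simp add: powr_minus_divide)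
      finally show ?thesis by simp
    next
      case False
      then show ?thesis by (simp add: h_def)
    qed
    show ?thesis
    proof (rule summableI_nonneg_bounded[where x=K])
      fix n
      show "0 \<le> real (card (A (Suc n))) / real (Suc n) powr s" by simp
    next
      fix N
      have fin: "\<forall>i\<in>{..<N}. finite (h i)" by (simp add: h_def)
      have disj: "\<forall>i\<in>{..<N}. \<forall>j\<in>{..<N}. i \<noteq> j \<longrightarrow> h i \<inter> h j = {}" by (auto simp: h_def A_def)
      have "(\<Sum>i<N. real (card (A (Suc i))) / real (Suc i) powr s) = (\<Sum>i<N. \<Sum>M\<in>h i. real (idx UNIV M) powr (-s))"
        by (intro sum.cong refl trm)
      also have "\<dots> = (\<Sum>M\<in>(\<Union>i<N. h i). real (idx UNIV M) powr (-s))"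
        by (rule sum.UNION_disjoint[OF _ fin disj, symmetric]) simp
      also have "\<dots> \<le> K"
      proof (rule K)
        show "finite (\<Union>i<N. h i)" using fin by simp
        show "(\<Union>i<N. h i) \<subseteq> GQ UNIV Q"
          using RQ by (auto simp: h_def A_def split: if_splits)
      qed
      finally show "(\<Sum>i<N. real (card (A (Suc i))) / real (Suc i) powr s) \<le> K" .
    qed
  qed
  have summ: "summable (\<lambda>n. real (card (A (Suc n))) / real (Suc n) powr s)" if ts: "t < s" for s
  proof -
    define s' where "s' = min s (t + 1/2)"
    have s': "t < s'" "s' \<le> t + 1/2" "s' \<le> s" using ts by (auto simp: s'_def)
    show ?thesis
    proof (rule summable_comparison_test'[OF summ1[OF s'(1,2)]])
      fix n :: nat
      have "real (Suc n) powr s' \<le> real (Suc n) powr s" using s'(3) by (intro powr_mono) auto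
      then show "norm (real (card (A (Suc n))) / real (Suc n) powr s) \<le> real (card (A (Suc n))) / real (Suc n) powr s'"
        by (auto intro!: divide_left_mono)
    qed
  qed
  show ?thesis unfolding abscissa_def
  proof (rule ereal_le_epsilon2)
    fix e :: real assume e: "0 < e"
    have "ereal (t + e) \<in> {ereal s |s. summable (\<lambda>n. real (card {M. R M \<and> add_index M = Suc n}) / real (Suc n) powr s)}"
      using summ[of "t + e"] e by (auto simp: A_def)
    then have "Inf {ereal s |s. summable (\<lambda>n. real (card {M. R M \<and> add_index M = Suc n}) / real (Suc n) powr s)} \<le> ereal (t + e)"
      by (rule Inf_lower)
    then show "Inf {ereal s |s. summable (\<lambda>n. real (card {M. R M \<and> add_index M = Suc n}) / real (Suc n) powr s)} \<le> ereal t + ereal e"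
      by simp
  qed
qed

locale nf =
  fixes B :: "int^'n::finite \<Rightarrow> int^'n \<Rightarrow> int^'n" and a b c :: 'n and \<tau> :: int
  assumes bl: "bilin B" and al: "altn B" and ab: "a \<noteq> b" and ac: "a \<noteq> c" and bc: "b \<noteq> c"
    and tau: "\<tau> \<noteq> 0" and ca1: "\<forall>v. B (ev a) v = 0" and ca2: "\<forall>v. B v (ev a) = 0"
    and Bbc: "B (ev b) (ev c) = \<tau> *s ev a"
begin

lemma Gs_of: "add_subgroup M \<Longrightarrow> add_index M \<noteq> 0 \<Longrightarrow> M \<in> Gs UNIV"
  by (auto simp: Gs_def idx_UNIV idx_def card_eq_0_iff)

lemma Bb3: assumes "v \<in> VV (insert c (insert b {a}))" shows "B (ev b) v = (v$c * \<tau>) *s ev a"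
proof -
  have "v = (v$a) *s ev a + (v$b) *s ev b + (v$c) *s ev c"
    using vec_supp3[OF ab ac bc, of v] assms by (auto simp: VV_def)
  then have "B (ev b) v = B (ev b) ((v$a) *s ev a + (v$b) *s ev b + (v$c) *s ev c)" by metis
  also have "\<dots> = (v$a) *s B (ev b) (ev a) + (v$b) *s B (ev b) (ev b) + (v$c) *s B (ev b) (ev c)"
    by (simp only: bilin_add2[OF bl] bilin_smult2[OF bl])
  also have "\<dots> = (v$c * \<tau>) *s ev a" using ca2 al Bbc by (simp add: altn_def vector_smult_assoc)
  finally show ?thesis .
qed

lemma B2v: assumes "v \<in> VV (insert b {a})" shows "B v w = (v$b) *s B (ev b) w"
proof -
  have "v = (v$a) *s ev a + (v$b) *s ev b"
    using vec_supp2[OF ab, of v] assms by (auto simp: VV_def)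
  then have "B v w = B ((v$a) *s ev a + (v$b) *s ev b) w" by metis
  also have "\<dots> = (v$a) *s B (ev a) w + (v$b) *s B (ev b) w"
    by (simp only: bilin_add1[OF bl] bilin_smult1[OF bl])
  also have "\<dots> = (v$b) *s B (ev b) w" using ca1 by simp
  finally show ?thesis .
qed

lemma smult_ev_VV: "k *s ev a \<in> VV {a}" by (auto simp: VV_def)

lemma wit: assumes "M \<in> Gs UNIV" "j \<in> K"
  shows "\<exists>k>0. int k *s ev j \<in> M \<inter> VV K" "add_subgroup (M \<inter> VV K)"
    "\<exists>v\<in>M \<inter> VV K. v$j = int (dco j (M \<inter> VV K))"
proof -
  show e: "\<exists>k>0. int k *s ev j \<in> M \<inter> VV K" using Gs_finite_mult[OF assms(1) assms(2)] by simp
  show "add_subgroup (M \<inter> VV K)" using assms(1) by (auto simp: Gs_def intro!: subgroup_Int subgroup_VV)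
  show "\<exists>v\<in>M \<inter> VV K. v$j = int (dco j (M \<inter> VV K))" using dco_props(2)[OF e] .
qed

lemma sub_Q: assumes "lie_subring B M" "add_index M \<noteq> 0" shows "M \<in> GQ UNIV (Qs \<tau> a b c)"
proof -
  have sg: "add_subgroup M" using assms by (simp add: lie_subring_def)
  have MG: "M \<in> Gs UNIV" using Gs_of[OF sg assms(2)] .
  obtain v2 where v2: "v2 \<in> M" "v2 \<in> VV (insert b {a})" "v2$b = int (dco b (M \<inter> VV (insert b {a})))"
    using wit(3)[OF MG, of b "insert b {a}"] by auto
  obtain v3 where v3: "v3 \<in> M" "v3 \<in> VV (insert c (insert b {a}))" "v3$c = int (dco c (M \<inter> VV (insert c (insert b {a}))))"
    using wit(3)[OF MG, of c "insert c (insert b {a})"] by auto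
  have u: "B v2 v3 = (v2$b * (v3$c * \<tau>)) *s ev a"
    using B2v[OF v2(2)] Bb3[OF v3(2)] by (simp add: vector_smult_assoc)
  have "B v2 v3 \<in> M" using assms(1) v2(1) v3(1) by (simp add: lie_subring_def)
  then have uM: "B v2 v3 \<in> M \<inter> VV {a}" using u smult_ev_VV by simp
  have "int (dco a (M \<inter> VV {a})) dvd (B v2 v3)$a"
    using dco_dvd[OF wit(2)[OF MG, of a "{a}"] wit(1)[OF MG, of a "{a}"] uM] by simp
  then have "int (dco a (M \<inter> VV {a})) dvd \<tau> * int (dco b (M \<inter> VV (insert b {a}))) * int (dco c (M \<inter> VV (insert c (insert b {a}))))"
    using u v2(3) v3(3) by (simp add: mult_ac)
  then show ?thesis using MG by (simp add: GQ_def Qs_def)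
qed

lemma id_Q: assumes "lie_ideal B M" "add_index M \<noteq> 0" shows "M \<in> GQ UNIV (Qi \<tau> a b c)"
proof -
  have sg: "add_subgroup M" using assms by (simp add: lie_ideal_def)
  have MG: "M \<in> Gs UNIV" using Gs_of[OF sg assms(2)] .
  obtain v3 where v3: "v3 \<in> M" "v3 \<in> VV (insert c (insert b {a}))" "v3$c = int (dco c (M \<inter> VV (insert c (insert b {a}))))"
    using wit(3)[OF MG, of c "insert c (insert b {a})"] by auto
  have u: "B (ev b) v3 = (v3$c * \<tau>) *s ev a" using Bb3[OF v3(2)] .
  have "B (ev b) v3 \<in> M" using assms(1) v3(1) by (simp add: lie_ideal_def)
  then have uM: "B (ev b) v3 \<in> M \<inter> VV {a}" using u smult_ev_VV by simp
  have "int (dco a (M \<inter> VV {a})) dvd (B (ev b) v3)$a"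
    using dco_dvd[OF wit(2)[OF MG, of a "{a}"] wit(1)[OF MG, of a "{a}"] uM] by simp
  then have "int (dco a (M \<inter> VV {a})) dvd \<tau> * int (dco c (M \<inter> VV (insert c (insert b {a}))))"
    using u v3(3) by (simp add: mult_ac)
  then show ?thesis using MG by (simp add: GQ_def Qi_def)
qed

lemma card_R: "card (- J3 a b c) = CARD('n) - 3" "CARD('n) \<ge> 3"
proof -
  have c3: "card (J3 a b c) = 3" using ab ac bc by (simp add: J3_def)
  show "card (- J3 a b c) = CARD('n) - 3" using c3
    by (metis Compl_eq_Diff_UNIV card_Diff_subset finite top_greatest)
  show "CARD('n) \<ge> 3" using c3 card_mono[of UNIV "J3 a b c"] by simp
qed

lemma bounded_sub:
  assumes "real CARD('n) - 1/2 < s" "s \<le> real CARD('n)"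
  shows "bounded_at UNIV (Qs \<tau> a b c) s"
proof -
  have base: "bounded_at (J3 a b c) (Qs \<tau> a b c) s'" if s': "5/2 < s'" "s' \<le> 5/2 + 1/2" for s'
  proof -
    define p where "p = s' - 3/2"
    have p: "1 < p" using s' by (simp add: p_def)
    have "(\<Sum>M\<in>S. real (idx (J3 a b c) M) powr (-s')) \<le> \<bar>real_of_int \<tau>\<bar> powr (1/2) * (Zs p * Zs p * Zs p)"
      if S: "finite S" "S \<subseteq> GQ (J3 a b c) (Qs \<tau> a b c)" for S
    proof -
      obtain A1 A2 A3 where A: "finite A1" "finite A2" "finite A3" "0 \<notin> A1" "0 \<notin> A2" "0 \<notin> A3"
        and le: "(\<Sum>M\<in>S. real (idx (insert c (insert b {a})) M) powr (-s')) \<le>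
          (\<Sum>d1\<in>A1. \<Sum>d2\<in>A2. \<Sum>d3\<in>A3. if int d1 dvd \<tau> * int d2 * int d3 then real d1 powr (2-s') * real d2 powr (1-s') * real d3 powr (-s') else 0)"
        using base3[OF ab ac bc, where Q="Qs \<tau> a b c" and P="\<lambda>d1 d2 d3. int d1 dvd \<tau> * int d2 * int d3" and s=s' and S=S] S s'
        by (auto simp: Qs_def J3_def)
      have "(\<Sum>d1\<in>A1. \<Sum>d2\<in>A2. \<Sum>d3\<in>A3. if int d1 dvd \<tau> * int d2 * int d3 then real d1 powr (2-s') * real d2 powr (1-s') * real d3 powr (-s') else 0)
          \<le> \<bar>real_of_int \<tau>\<bar> powr (1/2) * (Zs p * Zs p * Zs p)"
        by (rule triple_bound[OF A _ _ p]) (use pt_sub[OF tau] s' in \<open>auto simp: p_def\<close>)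
      then show ?thesis using le by (simp add: J3_def)
    qed
    then show ?thesis by (auto simp: bounded_at_def)
  qed
  have cr: "real (card (- J3 a b c)) = real CARD('n) - 3" using card_R by (simp add: of_nat_diff)
  have fin: "finite (- J3 a b c)" "- J3 a b c \<inter> J3 a b c = {}" by auto
  have "bounded_at (J3 a b c \<union> - J3 a b c) (Qs \<tau> a b c) s"
  proof (rule gen_ind[OF fin, where ?s0.0="5/2" and Q="Qs \<tau> a b c"])
    show "\<And>s. 5/2 < s \<Longrightarrow> s \<le> 5/2 + 1/2 \<Longrightarrow> bounded_at (J3 a b c) (Qs \<tau> a b c) s" using base by simp
    show "\<And>M J. J3 a b c \<subseteq> J \<Longrightarrow> Qs \<tau> a b c (M \<inter> VV J) = Qs \<tau> a b c M" using Qs_loc by blast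
    show "1 \<le> (5/2::real)" by simp
    show "5/2 + real (card (- J3 a b c)) < s" "s \<le> 5/2 + real (card (- J3 a b c)) + 1/2" using cr assms by simp_all
  qed
  then show ?thesis by simp
qed

lemma bounded_id:
  assumes "real CARD('n) - 1 < s" "s \<le> real CARD('n) - 1/2"
  shows "bounded_at UNIV (Qi \<tau> a b c) s"
proof -
  have base: "bounded_at (J3 a b c) (Qi \<tau> a b c) s'" if s': "2 < s'" "s' \<le> 2 + 1/2" for s'
  proof -
    define p where "p = s' / 2"
    have p: "1 < p" using s' by (simp add: p_def)
    have "(\<Sum>M\<in>S. real (idx (J3 a b c) M) powr (-s')) \<le> \<bar>real_of_int \<tau>\<bar> powr (2 - s'/2) * (Zs p * Zs p * Zs p)"
      if S: "finite S" "S \<subseteq> GQ (J3 a b c) (Qi \<tau> a b c)" for S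
    proof -
      obtain A1 A2 A3 where A: "finite A1" "finite A2" "finite A3" "0 \<notin> A1" "0 \<notin> A2" "0 \<notin> A3"
        and le: "(\<Sum>M\<in>S. real (idx (insert c (insert b {a})) M) powr (-s')) \<le>
          (\<Sum>d1\<in>A1. \<Sum>d2\<in>A2. \<Sum>d3\<in>A3. if int d1 dvd \<tau> * int d3 then real d1 powr (2-s') * real d2 powr (1-s') * real d3 powr (-s') else 0)"
        using base3[OF ab ac bc, where Q="Qi \<tau> a b c" and P="\<lambda>d1 d2 d3. int d1 dvd \<tau> * int d3" and s=s' and S=S] S s'
        by (auto simp: Qi_def J3_def)
      have "(\<Sum>d1\<in>A1. \<Sum>d2\<in>A2. \<Sum>d3\<in>A3. if int d1 dvd \<tau> * int d3 then real d1 powr (2-s') * real d2 powr (1-s') * real d3 powr (-s') else 0)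
          \<le> \<bar>real_of_int \<tau>\<bar> powr (2 - s'/2) * (Zs p * Zs p * Zs p)"
        by (rule triple_bound[OF A _ _ p]) (use pt_id[OF tau] s' in \<open>auto simp: p_def\<close>)
      then show ?thesis using le by (simp add: J3_def)
    qed
    then show ?thesis by (auto simp: bounded_at_def)
  qed
  have cr: "real (card (- J3 a b c)) = real CARD('n) - 3" using card_R by (simp add: of_nat_diff)
  have fin: "finite (- J3 a b c)" "- J3 a b c \<inter> J3 a b c = {}" by auto
  have "bounded_at (J3 a b c \<union> - J3 a b c) (Qi \<tau> a b c) s"
  proof (rule gen_ind[OF fin, where ?s0.0="2" and Q="Qi \<tau> a b c"])
    show "\<And>s. 2 < s \<Longrightarrow> s \<le> 2 + 1/2 \<Longrightarrow> bounded_at (J3 a b c) (Qi \<tau> a b c) s" using base by simp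
    show "\<And>M J. J3 a b c \<subseteq> J \<Longrightarrow> Qi \<tau> a b c (M \<inter> VV J) = Qi \<tau> a b c M" using Qi_loc by blast
    show "1 \<le> (2::real)" by simp
    show "2 + real (card (- J3 a b c)) < s" "s \<le> 2 + real (card (- J3 a b c)) + 1/2" using cr assms by simp_all
  qed
  then show ?thesis by simp
qed

lemma abs_sub: "abscissa (num_subrings B) \<le> ereal (real CARD('n) - 1/2)"
proof -
  have e: "num_subrings B = (\<lambda>n. card {M. lie_subring B M \<and> add_index M = n})"
    by (simp add: num_subrings_def fun_eq_iff)
  show ?thesis unfolding e
    by (rule abscissa_le[where Q="Qs \<tau> a b c"]) (auto intro: sub_Q bounded_sub)
qed

lemma abs_id: "abscissa (num_ideals B) \<le> ereal (real CARD('n) - 1)"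
proof -
  have e: "num_ideals B = (\<lambda>n. card {M. lie_ideal B M \<and> add_index M = n})"
    by (simp add: num_ideals_def fun_eq_iff)
  show ?thesis unfolding e
    by (rule abscissa_le[where Q="Qi \<tau> a b c"]) (auto intro: id_Q bounded_id)
qed

end

theorem theorem4p3:
  fixes B :: "int^'n \<Rightarrow> int^'n \<Rightarrow> int^'n" and c :: nat
  assumes "lie_ring B" and "\<not> abelian_lie B" and "nilpotent_class B c"
  shows "(c = 2 \<longrightarrow> abscissa (num_subrings B) \<le> ereal (real CARD('n) - 1/2))
       \<and> (c > 2 \<longrightarrow> abscissa (num_subrings B) \<le> ereal (real CARD('n) - 1 / (real c - 1)))
       \<and> abscissa (num_ideals B) \<le> ereal (real CARD('n) - 1)"
proof -
  obtain x y where xy: "B x y \<noteq> 0" "\<forall>u. B u (B x y) = 0" "\<forall>u. B (B x y) u = 0"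
    using nilp_bracket[OF assms] by blast
  have bl: "bilin B" using assms(1) by (simp add: bilin_lie)
  have al: "altn B" using assms(1) by (simp add: lie_ring_def altn_def)
  obtain B' :: "int^'n \<Rightarrow> int^'n \<Rightarrow> int^'n" and a b d \<tau> where
    B': "\<forall>n. num_subrings B' n = num_subrings B n" "\<forall>n. num_ideals B' n = num_ideals B n"
      "bilin B'" "altn B'" "a \<noteq> b" "a \<noteq> d" "b \<noteq> d" "\<tau> \<noteq> 0"
      "\<forall>v. B' (ev a) v = 0" "\<forall>v. B' v (ev a) = 0" "B' (ev b) (ev d) = \<tau> *s ev a"
    using normal_form[OF bl al xy] by blast
  interpret nf B' a b d \<tau> using B' by unfold_locales auto
  have e1: "num_subrings B = num_subrings B'" using B'(1) by (simp add: fun_eq_iff)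
  have e2: "num_ideals B = num_ideals B'" using B'(2) by (simp add: fun_eq_iff)
  have s: "abscissa (num_subrings B) \<le> ereal (real CARD('n) - 1/2)" using abs_sub e1 by simp
  have i: "abscissa (num_ideals B) \<le> ereal (real CARD('n) - 1)" using abs_id e2 by simp
  have "c > 2 \<longrightarrow> abscissa (num_subrings B) \<le> ereal (real CARD('n) - 1 / (real c - 1))"
  proof
    assume c: "c > 2"
    then have "2 \<le> real c - 1" by simp
    then have "1 / (real c - 1) \<le> 1/2" by (simp add: divide_le_eq)
    then have "ereal (real CARD('n) - 1/2) \<le> ereal (real CARD('n) - 1 / (real c - 1))" by simp
    then show "abscissa (num_subrings B) \<le> ereal (real CARD('n) - 1 / (real c - 1))" using s by (rule order_trans[rotated])
  qed
  then show ?thesis using s i by blast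
qed

end
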